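(* Let $\mathcal a>1$, $\mathcal b>0$, $1<\mathcal c<\tfrac32$, $t_0>0$, $\beta,\beta_0>0$, and let $f\in C^2([t_0,t_m))$ be the solution of $$f''+\frac{\mathcal a}{t}f'-\frac{\mathcal b}{t^2}f(1+f)-\frac{\mathcal c(f')^2}{1+f}=0,\qquad f(t_0)=\beta,\ f'(t_0)=\beta_0,$$ on its maximal interval of existence $[t_0,t_m)$. Let $\theta\ge1$ and $A>0$ with $A\theta<\frac{2\mathcal b}{3-2\mathcal c}$, let $g(t)=\exp\big(-A\int_{t_0}^t\frac{f(s)(1+f(s))}{s^2f'(s)}ds\big)$ and $\eta_\theta(t):=\frac{1}{g(t)^\theta(1+f(t))}$. Then $\eta_\theta\in C^1([t_0,t_m))$, there is $C_\star>0$ with $0<\eta_\theta(t)\le C_\star$ for all $t\in[t_0,t_m)$, and $\lim_{t\to t_m}\eta_\theta(t)=0$ (so $\eta_\theta$ extends continuously to $[t_0,t_m]$ with $\eta_\theta(t_m)=0$).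
   Context: It is known (from prior work) that $t_m\in(t_0,\infty]$, $f>0$, $f'>0$ on $[t_0,t_m)$, $f(t),f'(t)\to+\infty$ as $t\to t_m$, and, if $t_m=\infty$, $1+f(t)>\exp(\mathtt C t^{(\bar{\mathcal a}+\triangle)/2}+\mathtt D t^{-1})$ with $\mathtt C>0$, $\triangle=\sqrt{(1-\mathcal a)^2+4\mathcal b}$, $\bar{\mathcal a}=1-\mathcal a$; and that $\chi(t)=\frac{t^{2-\mathcal a}f'(t)}{(1+f(t))^{2-\mathcal c}f(t)g(t)^{\mathcal b/A}}$ is bounded on $[t_0,t_m)$. *)

theory Defs
  imports "HOL-Analysis.Analysis" "HOL-Library.Extended_Real"
begin

definition ivl :: "real \<Rightarrow> ereal \<Rightarrow> real set" where
  "ivl t0 tm = {t. t0 \<le> t \<and> ereal t < tm}"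

definition ode_sol ::
  "real \<Rightarrow> real \<Rightarrow> real \<Rightarrow> real \<Rightarrow> real \<Rightarrow> real \<Rightarrow> real set \<Rightarrow> (real \<Rightarrow> real) \<Rightarrow> bool" where
  "ode_sol a b c t0 \<beta> \<beta>0 T h \<longleftrightarrow>
     (\<exists>h1 h2. (\<forall>t\<in>T. (h has_real_derivative h1 t) (at t within T)
                  \<and> (h1 has_real_derivative h2 t) (at t within T)
                  \<and> h2 t + a / t * h1 t - b / t\<^sup>2 * h t * (1 + h t)
                       - c * (h1 t)\<^sup>2 / (1 + h t) = 0)
       \<and> continuous_on T h2 \<and> h t0 = \<beta> \<and> h1 t0 = \<beta>0)"

definition to_tm :: "ereal \<Rightarrow> real filter" where
  "to_tm tm = (if tm = \<infinity> then at_top else at_left (real_of_ereal tm))"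

end

theory Submission
  imports Defs
begin


lemma ivl_mem: "t \<in> ivl t0 tm \<longleftrightarrow> t0 \<le> t \<and> ereal t < tm"
  by (simp add: ivl_def)

lemma ivl_interior:
  assumes "t \<in> ivl t0 tm" "t0 < t" shows "t \<in> interior (ivl t0 tm)"
proof -
  from assms have "ereal t < tm" by (simp add: ivl_def)
  then obtain r where r: "ereal t < ereal r" "ereal r < tm" using ereal_dense2 by blast
  have "{t0<..<r} \<subseteq> ivl t0 tm"
  proof
    fix x assume "x \<in> {t0<..<r}"
    then have "ereal x < ereal r" "t0 \<le> x" by auto
    then show "x \<in> ivl t0 tm" using r(2) less_trans unfolding ivl_def by blast
  qed
  moreover have "t \<in> {t0<..<r}" using r assms by auto
  ultimately show ?thesis by (meson interior_maximal open_greaterThanLessThan interiorI)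
qed

lemma ivl_between: "x \<in> ivl t0 tm \<Longrightarrow> z \<in> ivl t0 tm \<Longrightarrow> x \<le> y \<Longrightarrow> y \<le> z \<Longrightarrow> y \<in> ivl t0 tm"
  unfolding ivl_def using le_less_trans[of "ereal y" "ereal z" tm] by auto

lemma deriv_ivl_at:
  assumes "(F has_real_derivative D) (at t within ivl t0 tm)" "t \<in> ivl t0 tm" "t0 < t"
  shows "(F has_real_derivative D) (at t)"
  using assms at_within_interior[OF ivl_interior[OF assms(2,3)]] by simp

lemma deriv_cont_on:
  assumes d: "\<forall>t\<in>S. (F has_real_derivative F' t) (at t within S)"
  shows "continuous_on S F"
  unfolding continuous_on_eq_continuous_within
  using d DERIV_continuous by blast

lemma mono_ivl:
  assumes d: "\<forall>t\<in>ivl t0 tm. (F has_real_derivative F' t) (at t within ivl t0 tm)"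
    and x: "x \<in> ivl t0 tm" and y: "y \<in> ivl t0 tm" and xy: "x \<le> y"
    and nn: "\<And>t. x < t \<Longrightarrow> t < y \<Longrightarrow> F' t \<ge> 0"
  shows "F x \<le> F y"
proof (rule DERIV_nonneg_imp_increasing_open[OF xy])
  have sub: "{x..y} \<subseteq> ivl t0 tm" using ivl_between[OF x y] by auto
  have "continuous_on (ivl t0 tm) F" using deriv_cont_on[OF d] .
  then show "continuous_on {x..y} F" using sub continuous_on_subset by blast
  fix t assume t: "x < t" "t < y"
  have ti: "t \<in> ivl t0 tm" using sub t by auto
  moreover have "t0 < t" using x t by (auto simp: ivl_def)
  ultimately have "(F has_real_derivative F' t) (at t)"
    using d deriv_ivl_at by blast
  then show "\<exists>D. (F has_real_derivative D) (at t) \<and> 0 \<le> D"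
    using nn t by auto
qed


lemma E_alg:
  fixes P Q t u y z a b c :: real
  assumes "t > 0" "u > 0" "Q > 0" and z: "z = -a/t*y + b/t^2*(u-1)*u + c*y^2/u"
  shows "((2*a*(P/t)*y^2 + (z*y + z*y)*P)*Q - P*y^2*(2*c*(Q/u)*(0+y))) / (Q*Q)
         = 2*b*(P/t^2)*(u - 1)*(u/Q)*y"
proof -
  have "((2*a*(P/t)*y^2 + (z*y + z*y)*P)*Q - P*y^2*(2*c*(Q/u)*(0+y))) / (Q*Q)
        = 2*P*y*(a*y/t + z - c*y^2/u)/Q"
    using assms(1-3) by (simp add: field_simps power2_eq_square)
  also have "a*y/t + z - c*y^2/u = b/t^2*(u-1)*u" using z by simp
  finally show ?thesis by simp
qed

lemma powr_comp_deriv: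
  assumes "(g has_real_derivative g') (at x within S)" "g x > 0"
  shows "((\<lambda>x. g x powr r) has_real_derivative r * g x powr (r-1) * g') (at x within S)"
  using DERIV_chain2[OF has_real_derivative_powr[OF assms(2)] assms(1)] by simp

locale sol =
  fixes a b c t0 \<beta> \<beta>0 :: real and tm :: ereal and f f1 f2 :: "real \<Rightarrow> real"
  assumes ha: "a > 1" and hb: "b > 0" and hc1: "1 < c" and hc2: "c < 3/2"
    and ht0: "t0 > 0" and h\<beta>: "\<beta> > 0" and h\<beta>0: "\<beta>0 > 0"
    and htm: "ereal t0 < tm"
    and hf1: "\<forall>t\<in>ivl t0 tm. (f has_real_derivative f1 t) (at t within ivl t0 tm)"
    and hf2: "\<forall>t\<in>ivl t0 tm. (f1 has_real_derivative f2 t) (at t within ivl t0 tm)"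
    and hf2c: "continuous_on (ivl t0 tm) f2"
    and hode: "\<forall>t\<in>ivl t0 tm. f2 t + a / t * f1 t - b / t\<^sup>2 * f t * (1 + f t)
                                - c * (f1 t)\<^sup>2 / (1 + f t) = 0"
    and hinit: "f t0 = \<beta>" "f1 t0 = \<beta>0"
begin

abbreviation "I \<equiv> ivl t0 tm"

lemma t0I: "t0 \<in> I" using htm by (simp add: ivl_def)

lemma tpos: "t \<in> I \<Longrightarrow> t > 0" using ht0 by (auto simp: ivl_def)

lemma f_cont: "continuous_on I f" using deriv_cont_on hf1 by blast
lemma f1_cont: "continuous_on I f1" using deriv_cont_on hf2 by blast

lemma f2_eq: "t \<in> I \<Longrightarrow> f2 t = - a / t * f1 t + b / t\<^sup>2 * f t * (1 + f t) + c * (f1 t)\<^sup>2 / (1 + f t)"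
  using hode by (auto simp: algebra_simps)

lemma f1_pos: assumes t1: "t1 \<in> I" shows "f1 t1 > 0"
proof (rule ccontr)
  assume neg: "\<not> f1 t1 > 0"
  define Z where "Z = {t0..t1} \<inter> f1 -` {..0}"
  have t01: "t0 \<le> t1" using t1 by (simp add: ivl_def)
  have sub: "{t0..t1} \<subseteq> I" using ivl_between[OF t0I t1] by auto
  have "closed Z" unfolding Z_def
    by (rule continuous_closed_preimage[OF continuous_on_subset[OF f1_cont sub]]) auto
  moreover have "Z \<noteq> {}" using neg t01 unfolding Z_def by auto
  moreover have "bdd_below Z" unfolding Z_def by (rule bdd_belowI[of _ t0]) auto
  ultimately have sZ: "Inf Z \<in> Z" using closed_contains_Inf by blast
  define s where "s = Inf Z"
  have sI: "s \<in> I" using sZ sub unfolding s_def Z_def by auto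
  have fs: "f1 s \<le> 0" using sZ unfolding s_def Z_def by auto
  have "s \<noteq> t0" using fs hinit h\<beta>0 by auto
  then have st0: "s > t0" using sZ unfolding s_def Z_def by auto
  have below: "f1 x > 0" if "t0 \<le> x" "x < s" for x
  proof (rule ccontr)
    assume "\<not> f1 x > 0"
    then have "x \<in> Z" using that sZ unfolding Z_def s_def by auto
    then have "s \<le> x" unfolding s_def by (rule cInf_lower) (simp add: Z_def bdd_below_def, rule exI[of _ t0], auto)
    then show False using that by simp
  qed
  have "f t0 \<le> f s"
    by (rule mono_ivl[OF hf1 t0I sI]) (use st0 in \<open>auto intro!: less_imp_le below\<close>)
  then have fpos: "f s > 0" using hinit h\<beta> by simp
  have "f2 s > 0"
  proof -
    have "- a / s * f1 s \<ge> 0" using fs ha st0 ht0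
      by (simp add: divide_nonpos_pos mult_nonneg_nonpos)
    moreover have "b / s\<^sup>2 * f s * (1 + f s) > 0" using hb fpos st0 ht0 by simp
    moreover have "c * (f1 s)\<^sup>2 / (1 + f s) \<ge> 0" using hc1 fpos by simp
    ultimately show ?thesis using f2_eq[OF sI] by linarith
  qed
  moreover have "(f1 has_real_derivative f2 s) (at s)"
    using deriv_ivl_at hf2 sI st0 by blast
  ultimately obtain d where d: "d > 0" "\<forall>h>0. h < d \<longrightarrow> f1 (s - h) < f1 s"
    using DERIV_pos_inc_left by blast
  define h where "h = min (d/2) ((s - t0)/2)"
  have "h > 0" "h < d" using d st0 by (auto simp: h_def)
  then have "f1 (s - h) < f1 s" using d by blast
  moreover have "h \<le> (s - t0)/2" unfolding h_def by (rule min.cobounded2)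
  then have "f1 (s - h) > 0" using below[of "s-h"] \<open>h>0\<close> st0 by auto
  ultimately show False using fs by simp
qed

lemma f1_nn: "t \<in> I \<Longrightarrow> f1 t \<ge> 0" using f1_pos less_imp_le by blast

lemma f_ge: assumes "t \<in> I" shows "f t \<ge> \<beta>"
proof -
  have "f t0 \<le> f t"
    by (rule mono_ivl[OF hf1 t0I assms]) (use assms ivl_between[OF t0I assms] f1_nn in \<open>auto simp: ivl_mem\<close>)
  then show ?thesis using hinit by simp
qed

lemma f_pos: "t \<in> I \<Longrightarrow> f t > 0" using f_ge h\<beta> by (meson less_le_trans)

lemma f_mono: assumes "x \<in> I" "y \<in> I" "x \<le> y" shows "f x \<le> f y"
  by (rule mono_ivl[OF hf1 assms]) (use assms ivl_between[OF assms(1,2)] f1_nn in auto)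


definition E :: "real \<Rightarrow> real" where
  "E t = t powr (2*a) * (f1 t)\<^sup>2 / (1 + f t) powr (2*c)"

lemma E_deriv: assumes t: "t \<in> I"
  shows "(E has_real_derivative (2*b * t powr (2*a-2) * f t * (1+f t) powr (1-2*c) * f1 t)) (at t within I)"
proof -
  have ft: "1 + f t > 0" using f_pos[OF t] by simp
  have tp: "t > 0" using tpos[OF t] .
  have d1: "(f has_real_derivative f1 t) (at t within I)" using hf1 t by blast
  have d2: "(f1 has_real_derivative f2 t) (at t within I)" using hf2 t by blast
  have a1: "((\<lambda>t. t powr (2*a)) has_real_derivative (2*a) * t powr (2*a - 1)) (at t within I)"
    using has_real_derivative_powr[OF tp] has_field_derivative_at_within by blast
  have a2: "((\<lambda>t. (f1 t)\<^sup>2) has_real_derivative (f2 t * f1 t + f2 t * f1 t)) (at t within I)"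
    unfolding power2_eq_square by (rule DERIV_mult[OF d2 d2])
  have a0: "((\<lambda>t. 1 + f t) has_real_derivative (0 + f1 t)) (at t within I)"
    by (rule DERIV_add[OF DERIV_const d1])
  have a3: "((\<lambda>t. (1+f t) powr (2*c)) has_real_derivative (2*c) * (1+f t) powr (2*c-1) * (0 + f1 t)) (at t within I)"
    using DERIV_chain2[OF has_real_derivative_powr[OF ft] a0] by simp
  have Q: "(1 + f t) powr (2*c) > 0" using ft by simp
  have D: "(E has_real_derivative (((2*a) * t powr (2*a - 1) * (f1 t)\<^sup>2 + (f2 t * f1 t + f2 t * f1 t) * t powr (2*a)) * (1+f t) powr (2*c) - t powr (2*a) * (f1 t)\<^sup>2 * ((2*c) * (1+f t) powr (2*c-1) * (0 + f1 t))) / ((1+f t) powr (2*c) * (1+f t) powr (2*c))) (at t within I)"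
    unfolding E_def[abs_def] using DERIV_divide[OF DERIV_mult[OF a1 a2] a3] Q by simp
  have e1: "t powr (2*a - 1) = t powr (2*a) / t" using tp by (simp add: powr_diff)
  have e2: "(1+f t) powr (2*c - 1) = (1+f t) powr (2*c) / (1 + f t)" using ft by (simp add: powr_diff)
  have e3: "t powr (2*a - 2) = t powr (2*a) / t\<^sup>2" using tp by (simp add: powr_diff)
  have e4: "(1+f t) powr (1 - 2*c) = (1 + f t) / (1+f t) powr (2*c)" using ft by (simp add: powr_diff)
  have f2e: "f2 t = - a / t * f1 t + b / t\<^sup>2 * f t * (1 + f t) + c * (f1 t)\<^sup>2 / (1 + f t)"
    using f2_eq[OF t] .
  have "((2*a*(t powr (2*a)/t)*(f1 t)^2 + (f2 t*f1 t + f2 t*f1 t)*t powr (2*a))*(1+f t) powr (2*c)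
     - t powr (2*a)*(f1 t)^2*(2*c*((1+f t) powr (2*c)/(1+f t))*(0+f1 t))) / ((1+f t) powr (2*c)*(1+f t) powr (2*c))
     = 2*b*(t powr (2*a)/t^2)*((1+f t) - 1)*((1+f t)/(1+f t) powr (2*c))*f1 t"
    by (rule E_alg[OF tp ft Q]) (simp add: f2e)
  then show ?thesis
    using D unfolding e1 e2 e3 e4 by simp
qed


definition H :: "real \<Rightarrow> real" where
  "H y = (1+y) powr (3-2*c) / (3-2*c) + (1+y) powr (2-2*c) / (2*c-2)"

lemma H_deriv: assumes t: "t \<in> I"
  shows "((\<lambda>x. H (f x)) has_real_derivative f t * (1 + f t) powr (1-2*c) * f1 t) (at t within I)"
proof -
  have ft: "1 + f t > 0" using f_pos[OF t] by simp
  have d1: "(f has_real_derivative f1 t) (at t within I)" using hf1 t by blast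
  have a0: "((\<lambda>t. 1 + f t) has_real_derivative (0 + f1 t)) (at t within I)"
    by (rule DERIV_add[OF DERIV_const d1])
  have D: "((\<lambda>x. H (f x)) has_real_derivative
     ((3-2*c) * (1+f t) powr (3-2*c-1) * (0 + f1 t)) / (3-2*c) + ((2-2*c) * (1+f t) powr (2-2*c-1) * (0 + f1 t)) / (2*c-2)) (at t within I)"
    unfolding H_def
    by (intro DERIV_add DERIV_cdivide powr_comp_deriv[OF a0 ft])
  have c1: "3 - 2*c \<noteq> 0" "2*c - 2 \<noteq> 0" using hc1 hc2 by auto
  have e1: "(1+f t) powr (3-2*c-1) = (1 + f t) * (1+f t) powr (1-2*c)"
  proof -
    have "(1+f t) powr (3-2*c-1) = (1+f t) powr (1 + (1-2*c))" by (simp add: algebra_simps)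
    also have "\<dots> = (1 + f t) * (1+f t) powr (1-2*c)" using ft by (simp only: powr_add powr_one)
    finally show ?thesis .
  qed
  have e2: "(1+f t) powr (2-2*c-1) = (1+f t) powr (1-2*c)"
    by (simp add: algebra_simps)
  have "((3-2*c) * (1+f t) powr (3-2*c-1) * (0 + f1 t)) / (3-2*c) + ((2-2*c) * (1+f t) powr (2-2*c-1) * (0 + f1 t)) / (2*c-2)
        = f t * (1 + f t) powr (1-2*c) * f1 t"
  proof -
    have m1: "(3-2*c) * X / (3-2*c) = X" for X using c1 by simp
    have m2: "(2-2*c) * X / (2*c-2) = - X" for X using c1
    proof -
      have "(2-2*c) * X = - ((2*c-2) * X)" by (simp add: algebra_simps)
      then show ?thesis using c1 by simp
    qed
    show ?thesis unfolding e1 e2 mult.assoc m1 m2 by (simp add: algebra_simps)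
  qed
  then show ?thesis using D by simp
qed

lemma E_lower: assumes q: "q \<in> I" and t: "t \<in> I" and st: "q \<le> t"
  shows "E t - E q \<ge> 2*b*q powr (2*a-2) * (H (f t) - H (f q))"
proof -
  define \<Phi> where "\<Phi> x = E x - 2*b*q powr (2*a-2) * H (f x)" for x
  define \<Phi>' where "\<Phi>' x = 2*b * x powr (2*a-2) * f x * (1+f x) powr (1-2*c) * f1 x
      - 2*b*q powr (2*a-2) * (f x * (1 + f x) powr (1-2*c) * f1 x)" for x
  have d: "\<forall>x\<in>I. (\<Phi> has_real_derivative \<Phi>' x) (at x within I)"
    unfolding \<Phi>_def[abs_def] \<Phi>'_def
    by (intro ballI DERIV_diff E_deriv DERIV_cmult H_deriv)
  have "\<Phi> q \<le> \<Phi> t"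
  proof (rule mono_ivl[OF d q t st])
    fix x assume x: "q < x" "x < t"
    then have xI: "x \<in> I" using ivl_between[OF q t] by auto
    have "q powr (2*a-2) \<le> x powr (2*a-2)"
      using x tpos[OF q] ha by (intro powr_mono2) auto
    moreover have "0 \<le> f x * (1 + f x) powr (1-2*c) * f1 x"
      using f_pos[OF xI] f1_pos[OF xI] by simp
    ultimately have "2*b*q powr (2*a-2) * (f x * (1 + f x) powr (1-2*c) * f1 x)
        \<le> 2*b*x powr (2*a-2) * (f x * (1 + f x) powr (1-2*c) * f1 x)"
      using hb by (intro mult_right_mono mult_left_mono) auto
    then show "0 \<le> \<Phi>' x" unfolding \<Phi>'_def by (simp add: algebra_simps)
  qed
  then show ?thesis unfolding \<Phi>_def by (simp add: algebra_simps)
qed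

end




definition Gf :: "real \<Rightarrow> real \<Rightarrow> real \<Rightarrow> real \<Rightarrow> real \<Rightarrow> real \<Rightarrow> real" where
  "Gf a b c s y z = - a / s * z + b / s\<^sup>2 * y * (1 + y) + c * z\<^sup>2 / (1 + y)"

definition cl :: "real \<Rightarrow> real \<Rightarrow> real \<Rightarrow> real" where "cl lo hi x = max lo (min hi x)"

lemma cl_lip: "lo \<le> hi \<Longrightarrow> \<bar>cl lo hi x - cl lo hi x'\<bar> \<le> \<bar>x - x'\<bar>"
  unfolding cl_def by (auto simp: abs_if max_def min_def)

lemma cl_range: "lo \<le> hi \<Longrightarrow> lo \<le> cl lo hi x \<and> cl lo hi x \<le> hi"
  unfolding cl_def by auto

lemma cl_id: "lo \<le> x \<Longrightarrow> x \<le> hi \<Longrightarrow> cl lo hi x = x"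
  unfolding cl_def by auto

lemma cont_cl: "continuous_on S (\<lambda>x. cl lo hi (g x))" if "continuous_on S g"
  unfolding cl_def by (intro continuous_intros that)

lemma lip1: fixes s T a z z' :: real assumes "T > 0" "s \<ge> T" "a \<ge> 0"
  shows "\<bar>a / s * z - a / s * z'\<bar> \<le> a / T * \<bar>z - z'\<bar>"
proof -
  have "a / s * z - a / s * z' = a / s * (z - z')" by (simp add: right_diff_distrib)
  then have "\<bar>a / s * z - a / s * z'\<bar> = \<bar>a / s\<bar> * \<bar>z - z'\<bar>" by (simp only: abs_mult)
  also have "\<bar>a / s\<bar> = a / s" using assms by simp
  finally have "\<bar>a / s * z - a / s * z'\<bar> = a / s * \<bar>z - z'\<bar>" .
  also have "\<dots> \<le> a / T * \<bar>z - z'\<bar>"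
    using assms by (intro mult_right_mono divide_left_mono) auto
  finally show ?thesis .
qed

lemma lip2: fixes s T b y y' Y :: real assumes "T > 0" "s \<ge> T" "b \<ge> 0" "\<bar>y\<bar> \<le> Y" "\<bar>y'\<bar> \<le> Y"
  shows "\<bar>b / s\<^sup>2 * y * (1 + y) - b / s\<^sup>2 * y' * (1 + y')\<bar> \<le> b / T\<^sup>2 * (1 + 2*Y) * \<bar>y - y'\<bar>"
proof -
  have "b / s\<^sup>2 * y * (1 + y) - b / s\<^sup>2 * y' * (1 + y') = b / s\<^sup>2 * ((y - y') * (1 + y + y'))"
    by (simp add: algebra_simps)
  then have "\<bar>b / s\<^sup>2 * y * (1 + y) - b / s\<^sup>2 * y' * (1 + y')\<bar> = b / s\<^sup>2 * (\<bar>1 + y + y'\<bar> * \<bar>y - y'\<bar>)"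
    using assms by (simp add: abs_mult)
  also have "\<dots> \<le> b / T\<^sup>2 * ((1 + 2*Y) * \<bar>y - y'\<bar>)"
  proof (rule mult_mono)
    show "b / s\<^sup>2 \<le> b / T\<^sup>2" using assms by (intro divide_left_mono power_mono) auto
    show "\<bar>1 + y + y'\<bar> * \<bar>y - y'\<bar> \<le> (1 + 2*Y) * \<bar>y - y'\<bar>"
      using assms by (intro mult_right_mono) auto
  qed (use assms in auto)
  finally show ?thesis by simp
qed

lemma eq_gen: fixes u u' z z' :: real assumes "u \<noteq> 0" "u' \<noteq> 0"
  shows "z\<^sup>2 / u - z'\<^sup>2 / u' = (z - z') * (z + z') / u + z'\<^sup>2 * (u' - u) / (u * u')"
  using assms by (simp add: field_simps power2_eq_square)

lemma lip3: fixes c y y' z z' L Z :: real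
  assumes "c \<ge> 0" "L > 0" "1 + y \<ge> L" "1 + y' \<ge> L" "\<bar>z\<bar> \<le> Z" "\<bar>z'\<bar> \<le> Z"
  shows "\<bar>c * z\<^sup>2 / (1 + y) - c * z'\<^sup>2 / (1 + y')\<bar> \<le> c * (2*Z/L * \<bar>z - z'\<bar> + Z\<^sup>2/(L*L) * \<bar>y - y'\<bar>)"
proof -
  have u: "1 + y > 0" "1 + y' > 0" using assms by auto
  have eq: "z\<^sup>2 / (1 + y) - z'\<^sup>2 / (1 + y') = (z - z') * (z + z') / (1 + y) + z'\<^sup>2 * (y' - y) / ((1 + y) * (1 + y'))"
    using eq_gen[of "1+y" "1+y'" z z'] u by simp
  have t1: "\<bar>(z - z') * (z + z') / (1 + y)\<bar> \<le> 2*Z/L * \<bar>z - z'\<bar>"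
  proof -
    have "\<bar>(z - z') * (z + z') / (1 + y)\<bar> = \<bar>z + z'\<bar> * \<bar>z - z'\<bar> / (1 + y)"
      using u by (simp add: abs_mult mult.commute)
    also have "\<dots> \<le> (2*Z) * \<bar>z - z'\<bar> / L"
    proof (rule frac_le)
      show "\<bar>z + z'\<bar> * \<bar>z - z'\<bar> \<le> (2 * Z) * \<bar>z - z'\<bar>" using assms by (intro mult_right_mono) auto
    qed (use assms u in auto)
    also have "\<dots> = 2*Z/L * \<bar>z - z'\<bar>" by simp
    finally show ?thesis .
  qed
  have t2: "\<bar>z'\<^sup>2 * (y' - y) / ((1 + y) * (1 + y'))\<bar> \<le> Z\<^sup>2/(L*L) * \<bar>y - y'\<bar>"
  proof -
    have "\<bar>z'\<^sup>2 * (y' - y) / ((1 + y) * (1 + y'))\<bar> = z'\<^sup>2 * \<bar>y - y'\<bar> / ((1 + y) * (1 + y'))"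
      using u by (simp add: abs_mult abs_minus_commute)
    also have "\<dots> \<le> Z\<^sup>2 * \<bar>y - y'\<bar> / (L * L)"
    proof (rule frac_le)
      have "\<bar>z'\<bar>\<^sup>2 \<le> Z\<^sup>2" using assms(6) by (rule power_mono) simp
      then have "z'\<^sup>2 \<le> Z\<^sup>2" by simp
      then show "z'\<^sup>2 * \<bar>y - y'\<bar> \<le> Z\<^sup>2 * \<bar>y - y'\<bar>" by (intro mult_right_mono) auto
      show "L * L \<le> (1 + y) * (1 + y')" using assms by (intro mult_mono) auto
    qed (use assms u in auto)
    finally show ?thesis by simp
  qed
  have "c * z\<^sup>2 / (1 + y) - c * z'\<^sup>2 / (1 + y') = c * (z\<^sup>2 / (1 + y) - z'\<^sup>2 / (1 + y'))"
    by (simp add: right_diff_distrib)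
  then have "\<bar>c * z\<^sup>2 / (1 + y) - c * z'\<^sup>2 / (1 + y')\<bar> = \<bar>c\<bar> * \<bar>z\<^sup>2 / (1 + y) - z'\<^sup>2 / (1 + y')\<bar>"
    by (simp only: abs_mult)
  then have "\<bar>c * z\<^sup>2 / (1 + y) - c * z'\<^sup>2 / (1 + y')\<bar> = c * \<bar>z\<^sup>2 / (1 + y) - z'\<^sup>2 / (1 + y')\<bar>"
    using assms by simp
  also have "\<dots> \<le> c * (2*Z/L * \<bar>z - z'\<bar> + Z\<^sup>2/(L*L) * \<bar>y - y'\<bar>)"
  proof (rule mult_left_mono)
    show "\<bar>z\<^sup>2 / (1 + y) - z'\<^sup>2 / (1 + y')\<bar> \<le> 2*Z/L * \<bar>z - z'\<bar> + Z\<^sup>2/(L*L) * \<bar>y - y'\<bar>"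
      unfolding eq using abs_triangle_ineq t1 t2 by (rule order_trans[OF _ add_mono])
  qed (use assms in simp)
  finally show ?thesis .
qed


definition LGc :: "real \<Rightarrow> real \<Rightarrow> real \<Rightarrow> real \<Rightarrow> real \<Rightarrow> real \<Rightarrow> real" where
  "LGc a b c T L1 L2 = a/T + b/T\<^sup>2*(1+2*(\<bar>L1\<bar>+1)) + c*(2*(\<bar>L2\<bar>+1)/L1 + (\<bar>L2\<bar>+1)\<^sup>2/(L1*L1))"

definition MGc :: "real \<Rightarrow> real \<Rightarrow> real \<Rightarrow> real \<Rightarrow> real \<Rightarrow> real \<Rightarrow> real" where
  "MGc a b c T L1 L2 = a/T*(\<bar>L2\<bar>+1) + b/T\<^sup>2*(\<bar>L1\<bar>+1)*(1+(\<bar>L1\<bar>+1)) + c*(\<bar>L2\<bar>+1)\<^sup>2/L1"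

lemma Gf_lip:
  assumes "T > 0" "s \<ge> T" "a \<ge> 0" "b \<ge> 0" "c \<ge> 0" "L1 > 0"
    "\<bar>y - L1\<bar> \<le> 1" "\<bar>y' - L1\<bar> \<le> 1" "\<bar>z - L2\<bar> \<le> 1" "\<bar>z' - L2\<bar> \<le> 1"
  shows "\<bar>Gf a b c s y z - Gf a b c s y' z'\<bar> \<le> LGc a b c T L1 L2 * (\<bar>y - y'\<bar> + \<bar>z - z'\<bar>)"
proof -
  define Y where "Y = \<bar>L1\<bar> + 1"
  define Z where "Z = \<bar>L2\<bar> + 1"
  have yY: "\<bar>y\<bar> \<le> Y" "\<bar>y'\<bar> \<le> Y" using assms unfolding Y_def by auto
  have zZ: "\<bar>z\<bar> \<le> Z" "\<bar>z'\<bar> \<le> Z" using assms unfolding Z_def by auto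
  have uL: "1 + y \<ge> L1" "1 + y' \<ge> L1" using assms by auto
  have h1: "\<bar>a / s * z - a / s * z'\<bar> \<le> a / T * \<bar>z - z'\<bar>" using lip1 assms by blast
  have h2: "\<bar>b / s\<^sup>2 * y * (1 + y) - b / s\<^sup>2 * y' * (1 + y')\<bar> \<le> b / T\<^sup>2 * (1 + 2*Y) * \<bar>y - y'\<bar>"
    using lip2[OF assms(1,2,4) yY] .
  have h3: "\<bar>c * z\<^sup>2 / (1 + y) - c * z'\<^sup>2 / (1 + y')\<bar> \<le> c * (2*Z/L1 * \<bar>z - z'\<bar> + Z\<^sup>2/(L1*L1) * \<bar>y - y'\<bar>)"
    using lip3[OF assms(5,6) uL zZ] .
  have "Gf a b c s y z - Gf a b c s y' z' = - (a / s * z - a / s * z') + (b / s\<^sup>2 * y * (1 + y) - b / s\<^sup>2 * y' * (1 + y'))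
     + (c * z\<^sup>2 / (1 + y) - c * z'\<^sup>2 / (1 + y'))" unfolding Gf_def by simp
  then have "\<bar>Gf a b c s y z - Gf a b c s y' z'\<bar> \<le> \<bar>a / s * z - a / s * z'\<bar> + \<bar>b / s\<^sup>2 * y * (1 + y) - b / s\<^sup>2 * y' * (1 + y')\<bar>
     + \<bar>c * z\<^sup>2 / (1 + y) - c * z'\<^sup>2 / (1 + y')\<bar>" by linarith
  also have "\<dots> \<le> a / T * \<bar>z - z'\<bar> + b / T\<^sup>2 * (1 + 2*Y) * \<bar>y - y'\<bar> + c * (2*Z/L1 * \<bar>z - z'\<bar> + Z\<^sup>2/(L1*L1) * \<bar>y - y'\<bar>)"
    using h1 h2 h3 by linarith
  also have "\<dots> = (a / T + c * (2*Z/L1)) * \<bar>z - z'\<bar> + (b / T\<^sup>2 * (1 + 2*Y) + c * (Z\<^sup>2/(L1*L1))) * \<bar>y - y'\<bar>"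
    by (simp add: algebra_simps)
  also have "\<dots> \<le> LGc a b c T L1 L2 * \<bar>z - z'\<bar> + LGc a b c T L1 L2 * \<bar>y - y'\<bar>"
  proof (rule add_mono)
    have n1: "b / T\<^sup>2 * (1 + 2*Y) \<ge> 0" "c * (Z\<^sup>2/(L1*L1)) \<ge> 0" "a / T \<ge> 0" "c * (2*Z/L1) \<ge> 0"
      using assms unfolding Y_def Z_def by auto
    have "LGc a b c T L1 L2 = a / T + b / T\<^sup>2 * (1 + 2*Y) + c * (2*Z/L1) + c * (Z\<^sup>2/(L1*L1))"
      unfolding LGc_def Y_def Z_def by (simp add: algebra_simps)
    then have l1: "a / T + c * (2*Z/L1) \<le> LGc a b c T L1 L2" and l2: "b / T\<^sup>2 * (1 + 2*Y) + c * (Z\<^sup>2/(L1*L1)) \<le> LGc a b c T L1 L2"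
      using n1 by linarith+
    show "(a / T + c * (2*Z/L1)) * \<bar>z - z'\<bar> \<le> LGc a b c T L1 L2 * \<bar>z - z'\<bar>" using l1 by (rule mult_right_mono) simp
    show "(b / T\<^sup>2 * (1 + 2*Y) + c * (Z\<^sup>2/(L1*L1))) * \<bar>y - y'\<bar> \<le> LGc a b c T L1 L2 * \<bar>y - y'\<bar>" using l2 by (rule mult_right_mono) simp
  qed
  finally show ?thesis by (simp add: algebra_simps)
qed

lemma Gf_bound:
  assumes "T > 0" "s \<ge> T" "a \<ge> 0" "b \<ge> 0" "c \<ge> 0" "L1 > 0" "\<bar>y - L1\<bar> \<le> 1" "\<bar>z - L2\<bar> \<le> 1"
  shows "\<bar>Gf a b c s y z\<bar> \<le> MGc a b c T L1 L2"
proof -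
  define Y where "Y = \<bar>L1\<bar> + 1"
  define Z where "Z = \<bar>L2\<bar> + 1"
  have yY: "\<bar>y\<bar> \<le> Y" using assms unfolding Y_def by auto
  have zZ: "\<bar>z\<bar> \<le> Z" using assms unfolding Z_def by auto
  have uL: "1 + y \<ge> L1" using assms by auto
  have sp: "s > 0" using assms by simp
  have h1: "\<bar>- a / s * z\<bar> \<le> a / T * Z"
  proof -
    have "\<bar>- a / s * z\<bar> = a / s * \<bar>z\<bar>" using assms sp by (simp add: abs_mult)
    also have "\<dots> \<le> a / T * Z" using assms zZ by (intro mult_mono divide_left_mono) auto
    finally show ?thesis .
  qed
  have h2: "\<bar>b / s\<^sup>2 * y * (1 + y)\<bar> \<le> b / T\<^sup>2 * Y * (1 + Y)"
  proof -
    have "\<bar>b / s\<^sup>2 * y * (1 + y)\<bar> = b / s\<^sup>2 * (\<bar>y\<bar> * \<bar>1 + y\<bar>)" using assms sp by (simp add: abs_mult)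
    also have "\<dots> \<le> b / T\<^sup>2 * (Y * (1 + Y))"
    proof (rule mult_mono)
      show "b / s\<^sup>2 \<le> b / T\<^sup>2" using assms by (intro divide_left_mono power_mono) auto
      show "\<bar>y\<bar> * \<bar>1 + y\<bar> \<le> Y * (1 + Y)" using yY by (intro mult_mono) auto
    qed (use assms in auto)
    finally show ?thesis by simp
  qed
  have h3: "\<bar>c * z\<^sup>2 / (1 + y)\<bar> \<le> c * Z\<^sup>2 / L1"
  proof -
    have "\<bar>c * z\<^sup>2 / (1 + y)\<bar> = c * z\<^sup>2 / (1 + y)" using assms uL by simp
    also have "\<dots> \<le> c * Z\<^sup>2 / L1"
    proof (rule frac_le)
      have "\<bar>z\<bar>\<^sup>2 \<le> Z\<^sup>2" using zZ by (rule power_mono) simp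
      then show "c * z\<^sup>2 \<le> c * Z\<^sup>2" using assms by (intro mult_left_mono) auto
    qed (use assms uL in auto)
    finally show ?thesis .
  qed
  have "\<bar>Gf a b c s y z\<bar> \<le> \<bar>- a / s * z\<bar> + \<bar>b / s\<^sup>2 * y * (1 + y)\<bar> + \<bar>c * z\<^sup>2 / (1 + y)\<bar>"
    unfolding Gf_def by (rule order_trans[OF abs_triangle_ineq add_mono[OF abs_triangle_ineq order_refl]])
  also have "\<dots> \<le> a / T * Z + b / T\<^sup>2 * Y * (1 + Y) + c * Z\<^sup>2 / L1" using h1 h2 h3 by linarith
  finally show ?thesis unfolding MGc_def Y_def Z_def by simp
qed


lemma fst_le: "\<bar>fst v\<bar> \<le> norm (v::real\<times>real)"
  using norm_fst_le[of "fst v" "snd v"] by simp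
lemma snd_le: "\<bar>snd v\<bar> \<le> norm (v::real\<times>real)"
  using norm_snd_le[of "snd v" "fst v"] by simp
lemma pair_le: "norm (v::real\<times>real) \<le> \<bar>fst v\<bar> + \<bar>snd v\<bar>"
  using norm_Pair_le[of "fst v" "snd v"] by simp

lemma picard:
  assumes T: "T > 0" and abc: "a \<ge> 0" "b \<ge> 0" "c \<ge> 0" and L1: "L1 > 0"
  obtains \<delta> y z where "\<delta> > 0"
    "\<And>t. t \<in> {T..T+\<delta>} \<Longrightarrow> (y has_real_derivative z t) (at t within {T..T+\<delta>})"
    "\<And>t. t \<in> {T..T+\<delta>} \<Longrightarrow> (z has_real_derivative Gf a b c t (y t) (z t)) (at t within {T..T+\<delta>})"
    "\<And>t. t \<in> {T..T+\<delta>} \<Longrightarrow> \<bar>y t - L1\<bar> \<le> 1 \<and> \<bar>z t - L2\<bar> \<le> 1"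
    "y T = L1" "z T = L2"
proof -
  define LG where "LG = LGc a b c T L1 L2"
  define MG where "MG = MGc a b c T L1 L2"
  define K0 where "K0 = (\<bar>L2\<bar> + 1) + MG"
  define K1 where "K1 = 2 * (1 + LG)"
  have LG0: "LG \<ge> 0" unfolding LG_def LGc_def using T abc L1 by simp
  have MG0: "MG \<ge> 0" unfolding MG_def MGc_def using T abc L1 by simp
  have K00: "K0 \<ge> 0" unfolding K0_def using MG0 by simp
  have K10: "K1 \<ge> 0" unfolding K1_def using LG0 by simp
  define \<delta> where "\<delta> = min 1 (min (1/(K0+1)) (1/(2*K1+1)))"
  have d0: "\<delta> > 0" unfolding \<delta>_def using K00 K10 by simp
  have d1: "\<delta> \<le> 1" unfolding \<delta>_def by simp
  have dK0: "\<delta> * K0 \<le> 1"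
  proof -
    have "\<delta> \<le> 1/(K0+1)" unfolding \<delta>_def by simp
    then have "\<delta> * K0 \<le> 1/(K0+1) * K0" using K00 by (rule mult_right_mono)
    also have "\<dots> \<le> 1" using K00 by (simp add: field_simps)
    finally show ?thesis .
  qed
  have dK1: "\<delta> * K1 \<le> 1/2"
  proof -
    have "\<delta> \<le> 1/(2*K1+1)" unfolding \<delta>_def by simp
    then have "\<delta> * K1 \<le> 1/(2*K1+1) * K1" using K10 by (rule mult_right_mono)
    also have "\<dots> \<le> 1/2" using K10 by (simp add: field_simps)
    finally show ?thesis .
  qed
  define cy where "cy x = cl (L1-1) (L1+1) x" for x
  define cz where "cz x = cl (L2-1) (L2+1) x" for x
  have cyr: "\<bar>cy x - L1\<bar> \<le> 1" for x using cl_range[of "L1-1" "L1+1" x] unfolding cy_def by auto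
  have czr: "\<bar>cz x - L2\<bar> \<le> 1" for x using cl_range[of "L2-1" "L2+1" x] unfolding cz_def by auto
  define Fv where "Fv s p = (cz (snd p), Gf a b c s (cy (fst p)) (cz (snd p)))" for s p
  have Fv_bound: "norm (Fv s p) \<le> K0" if "s \<ge> T" for s p
  proof -
    have "norm (Fv s p) \<le> \<bar>cz (snd p)\<bar> + \<bar>Gf a b c s (cy (fst p)) (cz (snd p))\<bar>"
      using pair_le[of "Fv s p"] unfolding Fv_def by simp
    moreover have "\<bar>cz (snd p)\<bar> \<le> \<bar>L2\<bar> + 1" using czr[of "snd p"] by linarith
    moreover have "\<bar>Gf a b c s (cy (fst p)) (cz (snd p))\<bar> \<le> MG"
      unfolding MG_def using Gf_bound[OF T that abc L1 cyr czr] .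
    ultimately show ?thesis unfolding K0_def by linarith
  qed
  have Fv_lip: "norm (Fv s p - Fv s q) \<le> K1 * norm (p - q)" if "s \<ge> T" for s p q
  proof -
    have dy: "\<bar>cy (fst p) - cy (fst q)\<bar> \<le> norm (p - q)"
      using cl_lip[of "L1-1" "L1+1" "fst p" "fst q"] fst_le[of "p - q"] unfolding cy_def by simp
    have dz: "\<bar>cz (snd p) - cz (snd q)\<bar> \<le> norm (p - q)"
      using cl_lip[of "L2-1" "L2+1" "snd p" "snd q"] snd_le[of "p - q"] unfolding cz_def by simp
    have g: "\<bar>Gf a b c s (cy (fst p)) (cz (snd p)) - Gf a b c s (cy (fst q)) (cz (snd q))\<bar>
        \<le> LG * (\<bar>cy (fst p) - cy (fst q)\<bar> + \<bar>cz (snd p) - cz (snd q)\<bar>)"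
      unfolding LG_def using Gf_lip[OF T that abc L1 cyr cyr czr czr] .
    have "LG * (\<bar>cy (fst p) - cy (fst q)\<bar> + \<bar>cz (snd p) - cz (snd q)\<bar>) \<le> LG * (2 * norm (p - q))"
      using dy dz LG0 by (intro mult_left_mono) auto
    moreover have "norm (Fv s p - Fv s q) \<le> \<bar>cz (snd p) - cz (snd q)\<bar> + \<bar>Gf a b c s (cy (fst p)) (cz (snd p)) - Gf a b c s (cy (fst q)) (cz (snd q))\<bar>"
      using pair_le[of "Fv s p - Fv s q"] unfolding Fv_def by simp
    ultimately have "norm (Fv s p - Fv s q) \<le> norm (p - q) + LG * (2 * norm (p - q))"
      using g dz by linarith
    also have "\<dots> \<le> K1 * norm (p - q)" unfolding K1_def using LG0 by (simp add: algebra_simps)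
    finally show ?thesis .
  qed
  have Fv_cont: "continuous_on {T..T+\<delta>} (\<lambda>s. Fv s (Y s))" if Y: "continuous_on {T..T+\<delta>} Y" for Y
  proof -
    have c1: "continuous_on {T..T+\<delta>} (\<lambda>s. cy (fst (Y s)))" unfolding cy_def
      by (intro cont_cl continuous_intros Y)
    have c2: "continuous_on {T..T+\<delta>} (\<lambda>s. cz (snd (Y s)))" unfolding cz_def
      by (intro cont_cl continuous_intros Y)
    have nz: "1 + cy (fst (Y s)) \<noteq> 0" for s using cyr[of "fst (Y s)"] L1 by auto
    show ?thesis unfolding Fv_def Gf_def
      by (intro continuous_intros c1 c2) (use nz T in auto)
  qed
  define clT where "clT t = max T (min (T+\<delta>) t)" for t
  have clT_in: "clT t \<in> {T..T+\<delta>}" for t unfolding clT_def using d0 by auto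
  have clT_id: "t \<in> {T..T+\<delta>} \<Longrightarrow> clT t = t" for t unfolding clT_def by auto
  have clT_cont: "continuous_on UNIV clT" unfolding clT_def by (intro continuous_intros)
  define \<phi> where "\<phi> Y t = (L1, L2) + integral {T..clT t} (\<lambda>s. Fv s (apply_bcontfun Y s))" for Y t
  have int_ok: "(\<lambda>s. Fv s (apply_bcontfun Y s)) integrable_on {T..x}" if "x \<in> {T..T+\<delta>}" for Y x
  proof -
    have "continuous_on {T..x} (\<lambda>s. Fv s (apply_bcontfun Y s))"
      by (rule continuous_on_subset[OF Fv_cont[OF continuous_on_apply_bcontfun]]) (use that in auto)
    then show ?thesis by (rule integrable_continuous_interval)
  qed
  have int_bound: "norm (integral {T..x} g) \<le> B * \<delta>"
    if "x \<in> {T..T+\<delta>}" "g integrable_on {T..x}" "\<And>s. s \<in> {T..x} \<Longrightarrow> norm (g s) \<le> B" "B \<ge> 0"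
    for x B and g :: "real \<Rightarrow> real \<times> real"
  proof -
    have "norm (integral {T..x} g) \<le> B * Henstock_Kurzweil_Integration.content {T..x}"
      using has_integral_bound_real[OF that(4) finite.emptyI integrable_integral[OF that(2)]] that(3) by auto
    also have "\<dots> = B * (x - T)" using that(1) by simp
    also have "\<dots> \<le> B * \<delta>" using that(1,4) by (intro mult_left_mono) auto
    finally show ?thesis .
  qed
  have phi_bc: "\<phi> Y \<in> bcontfun" for Y
  proof (rule bcontfun_normI)
    have ci: "continuous_on {T..T+\<delta>} (\<lambda>x. integral {T..x} (\<lambda>s. Fv s (apply_bcontfun Y s)))"
      by (rule indefinite_integral_continuous_1[OF int_ok]) (use d0 in auto)
    have "continuous_on UNIV (\<lambda>t. integral {T..clT t} (\<lambda>s. Fv s (apply_bcontfun Y s)))"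
      by (rule continuous_on_compose2[OF ci clT_cont]) (use clT_in in auto)
    then show "continuous_on UNIV (\<phi> Y)" unfolding \<phi>_def[abs_def] by (intro continuous_intros)
    fix t
    have "norm (integral {T..clT t} (\<lambda>s. Fv s (apply_bcontfun Y s))) \<le> K0 * \<delta>"
      by (rule int_bound[OF clT_in int_ok[OF clT_in]]) (use Fv_bound K00 in auto)
    then show "norm (\<phi> Y t) \<le> norm (L1, L2) + K0 * \<delta>"
      unfolding \<phi>_def by (rule order_trans[OF norm_triangle_ineq add_left_mono])
  qed
  define \<Phi> where "\<Phi> Y = Bcontfun (\<phi> Y)" for Y
  have Phi_app: "apply_bcontfun (\<Phi> Y) = \<phi> Y" for Y unfolding \<Phi>_def using phi_bc by (rule Bcontfun_inverse)
  have contr: "\<forall>Y Y'. dist (\<Phi> Y) (\<Phi> Y') \<le> 1/2 * dist Y Y'"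
  proof (intro allI)
    fix Y Y' :: "real \<Rightarrow>\<^sub>C (real \<times> real)"
    show "dist (\<Phi> Y) (\<Phi> Y') \<le> 1/2 * dist Y Y'"
    proof (rule dist_bound)
      fix t
      let ?x = "clT t"
      have "dist (apply_bcontfun (\<Phi> Y) t) (apply_bcontfun (\<Phi> Y') t)
          = norm (integral {T..?x} (\<lambda>s. Fv s (apply_bcontfun Y s)) - integral {T..?x} (\<lambda>s. Fv s (apply_bcontfun Y' s)))"
        unfolding Phi_app \<phi>_def dist_norm by simp
      also have "\<dots> = norm (integral {T..?x} (\<lambda>s. Fv s (apply_bcontfun Y s) - Fv s (apply_bcontfun Y' s)))"
        using integral_diff[OF int_ok[OF clT_in] int_ok[OF clT_in]] by simp
      also have "\<dots> \<le> (K1 * dist Y Y') * \<delta>"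
      proof (rule int_bound[OF clT_in])
        show "(\<lambda>s. Fv s (apply_bcontfun Y s) - Fv s (apply_bcontfun Y' s)) integrable_on {T..?x}"
          by (rule integrable_diff[OF int_ok[OF clT_in] int_ok[OF clT_in]])
        fix s assume s: "s \<in> {T..?x}"
        have "norm (Fv s (apply_bcontfun Y s) - Fv s (apply_bcontfun Y' s)) \<le> K1 * norm (apply_bcontfun Y s - apply_bcontfun Y' s)"
          using Fv_lip s by simp
        also have "\<dots> \<le> K1 * dist Y Y'"
          using dist_bounded[of Y s Y'] K10 unfolding dist_norm by (intro mult_left_mono) auto
        finally show "norm (Fv s (apply_bcontfun Y s) - Fv s (apply_bcontfun Y' s)) \<le> K1 * dist Y Y'" .
      qed (use K10 in simp)
      also have "\<dots> = (\<delta> * K1) * dist Y Y'" by (simp add: algebra_simps)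
      also have "\<dots> \<le> 1/2 * dist Y Y'" using dK1 by (intro mult_right_mono) auto
      finally show "dist (apply_bcontfun (\<Phi> Y) t) (apply_bcontfun (\<Phi> Y') t) \<le> 1/2 * dist Y Y'" .
    qed
  qed
  have "\<exists>!x. \<Phi> x = x" by (rule banach_fix_type[OF _ _ contr]) simp_all
  then obtain Yf where fixp: "\<Phi> Yf = Yf" by (meson ex1E)
  have Yeq: "apply_bcontfun Yf t = \<phi> Yf t" for t using Phi_app[of Yf] fixp by simp
  define Y0 where "Y0 = apply_bcontfun Yf"
  define G where "G s = Fv s (Y0 s)" for s
  have Yint: "Y0 t = (L1, L2) + integral {T..t} G" if t: "t \<in> {T..T+\<delta>}" for t
    using Yeq[of t] clT_id[OF t] unfolding Y0_def G_def \<phi>_def by simp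
  have ball: "norm (Y0 t - (L1, L2)) \<le> 1" if t: "t \<in> {T..T+\<delta>}" for t
  proof -
    have "norm (integral {T..t} G) \<le> K0 * \<delta>"
      unfolding G_def Y0_def
      by (rule int_bound[OF t int_ok[OF t]]) (use Fv_bound K00 in auto)
    then show ?thesis using Yint[OF t] dK0 by (simp add: mult.commute)
  qed
  define y where "y t = fst (Y0 t)" for t
  define z where "z t = snd (Y0 t)" for t
  have yz_ball: "\<bar>y t - L1\<bar> \<le> 1 \<and> \<bar>z t - L2\<bar> \<le> 1" if t: "t \<in> {T..T+\<delta>}" for t
    using ball[OF t] fst_le[of "Y0 t - (L1, L2)"] snd_le[of "Y0 t - (L1, L2)"] unfolding y_def z_def by simp
  have Geq: "G s = (z s, Gf a b c s (y s) (z s))" if s: "s \<in> {T..T+\<delta>}" for s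
  proof -
    have "cy (y s) = y s" unfolding cy_def using yz_ball[OF s] by (intro cl_id) auto
    moreover have "cz (z s) = z s" unfolding cz_def using yz_ball[OF s] by (intro cl_id) auto
    ultimately show ?thesis unfolding G_def Fv_def y_def z_def by simp
  qed
  have Gc: "continuous_on {T..T+\<delta>} G" unfolding G_def Y0_def by (rule Fv_cont[OF continuous_on_apply_bcontfun])
  have YD: "(Y0 has_vector_derivative G t) (at t within {T..T+\<delta>})" if t: "t \<in> {T..T+\<delta>}" for t
  proof -
    have "((\<lambda>u. integral {T..u} G) has_vector_derivative G t) (at t within {T..T+\<delta>})"
      by (rule integral_has_vector_derivative[OF Gc t])
    then have D: "((\<lambda>u. (L1, L2) + integral {T..u} G) has_vector_derivative G t) (at t within {T..T+\<delta>})"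
      by (rule has_vector_derivative_add[OF has_vector_derivative_const, simplified])
    show ?thesis by (rule has_vector_derivative_transform[OF t Yint D])
  qed
  show ?thesis
  proof (rule that[of \<delta> y z])
    show "\<delta> > 0" by (rule d0)
    fix t assume t: "t \<in> {T..T+\<delta>}"
    have "((\<lambda>x. fst (Y0 x)) has_vector_derivative fst (G t)) (at t within {T..T+\<delta>})"
      by (rule bounded_linear.has_vector_derivative[OF bounded_linear_fst YD[OF t]])
    then show "(y has_real_derivative z t) (at t within {T..T+\<delta>})"
      unfolding y_def[abs_def] Geq[OF t] by (simp add: has_real_derivative_iff_has_vector_derivative)
    have "((\<lambda>x. snd (Y0 x)) has_vector_derivative snd (G t)) (at t within {T..T+\<delta>})"
      by (rule bounded_linear.has_vector_derivative[OF bounded_linear_snd YD[OF t]])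
    then show "(z has_real_derivative Gf a b c t (y t) (z t)) (at t within {T..T+\<delta>})"
      unfolding z_def[abs_def] Geq[OF t] by (simp add: has_real_derivative_iff_has_vector_derivative)
    show "\<bar>y t - L1\<bar> \<le> 1 \<and> \<bar>z t - L2\<bar> \<le> 1" by (rule yz_ball[OF t])
  next
    have "T \<in> {T..T+\<delta>}" using d0 by simp
    then have "Y0 T = (L1, L2)" using Yint by simp
    then show "y T = L1" "z T = L2" unfolding y_def z_def by simp_all
  qed
qed




lemma ev_within: "(\<And>y. y \<in> A \<Longrightarrow> y \<noteq> x \<Longrightarrow> H y = F y) \<Longrightarrow> eventually (\<lambda>y. F y = H y) (at x within A)"
  unfolding eventually_at_filter by (simp add: always_eventually)

lemma glue_tendsto:
  assumes "(F \<longlongrightarrow> l) (at x within A)" "(G \<longlongrightarrow> l) (at x within B)"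
    "\<And>y. y \<in> A \<Longrightarrow> y \<noteq> x \<Longrightarrow> H y = F y" "\<And>y. y \<in> B \<Longrightarrow> y \<noteq> x \<Longrightarrow> H y = G y"
  shows "(H \<longlongrightarrow> l) (at x within A \<union> B)"
proof -
  have "(H \<longlongrightarrow> l) (at x within A)" using Lim_transform_eventually[OF assms(1) ev_within[OF assms(3)]] .
  moreover have "(H \<longlongrightarrow> l) (at x within B)" using Lim_transform_eventually[OF assms(2) ev_within[OF assms(4)]] .
  ultimately show ?thesis by (simp add: Lim_within_Un)
qed

lemma left_quot:
  assumes a0: "a0 < T"
    and d: "\<And>x. a0 < x \<Longrightarrow> x < T \<Longrightarrow> (f has_real_derivative f' x) (at x)"
    and fL: "(f \<longlongrightarrow> L0) (at_left T)"
    and e: "\<And>x. b < x \<Longrightarrow> x < T \<Longrightarrow> \<bar>f' x - L\<bar> \<le> \<epsilon>"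
    and y: "max a0 b < y" "y < T"
  shows "\<bar>L0 - f y - L * (T - y)\<bar> \<le> \<epsilon> * (T - y)"
proof -
  have ev: "eventually (\<lambda>w. \<bar>f w - f y - L * (w - y)\<bar> \<le> \<epsilon> * (w - y)) (at_left T)"
  proof -
    have "eventually (\<lambda>w. w \<in> {y<..<T}) (at_left T)" using eventually_at_left_real[OF y(2)] .
    then show ?thesis
    proof (rule eventually_mono)
      fix w assume w: "w \<in> {y<..<T}"
      have "\<exists>z. y < z \<and> z < w \<and> f w - f y = (w - y) * f' z"
        by (rule MVT2) (use w y in \<open>auto intro!: d\<close>)
      then obtain z where z: "y < z" "z < w" "f w - f y = (w - y) * f' z" by blast
      have "f w - f y - L * (w - y) = (w - y) * (f' z - L)" using z(3) by (simp add: algebra_simps)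
      then have "\<bar>f w - f y - L * (w - y)\<bar> = \<bar>w - y\<bar> * \<bar>f' z - L\<bar>" by (simp add: abs_mult)
      then have "\<bar>f w - f y - L * (w - y)\<bar> = (w - y) * \<bar>f' z - L\<bar>" using w by simp
      also have "\<dots> \<le> (w - y) * \<epsilon>" using e[of z] z w y by (intro mult_left_mono) auto
      finally show "\<bar>f w - f y - L * (w - y)\<bar> \<le> \<epsilon> * (w - y)" by (simp add: mult.commute)
    qed
  qed
  have l1: "((\<lambda>w. \<bar>f w - f y - L * (w - y)\<bar>) \<longlongrightarrow> \<bar>L0 - f y - L * (T - y)\<bar>) (at_left T)"
    by (intro tendsto_intros fL)
  have l2: "((\<lambda>w. \<epsilon> * (w - y)) \<longlongrightarrow> \<epsilon> * (T - y)) (at_left T)"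
    by (intro tendsto_intros)
  show ?thesis by (rule tendsto_le[OF _ l2 l1 ev]) simp
qed

lemma left_deriv:
  assumes a0: "a0 < T"
    and d: "\<And>x. a0 < x \<Longrightarrow> x < T \<Longrightarrow> (f has_real_derivative f' x) (at x)"
    and fL: "(f \<longlongrightarrow> L0) (at_left T)"
    and f'L: "(f' \<longlongrightarrow> L) (at_left T)"
    and HT: "H T = L0" and Hf: "\<And>y. y \<in> {a0..<T} \<Longrightarrow> H y = f y"
  shows "(H has_real_derivative L) (at T within {a0..T})"
  unfolding has_field_derivative_iff
proof (rule tendstoI)
  fix \<epsilon> :: real assume \<epsilon>: "\<epsilon> > 0"
  have "eventually (\<lambda>x. dist (f' x) L < \<epsilon>/2) (at_left T)" by (rule tendstoD[OF f'L]) (use \<epsilon> in simp)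
  then obtain b where b: "b < T" "\<And>x. b < x \<Longrightarrow> x < T \<Longrightarrow> dist (f' x) L < \<epsilon>/2"
    unfolding eventually_at_left_field by blast
  have e: "\<And>x. b < x \<Longrightarrow> x < T \<Longrightarrow> \<bar>f' x - L\<bar> \<le> \<epsilon>/2" using b(2) by (force simp: dist_real_def)
  show "eventually (\<lambda>y. dist ((H y - H T) / (y - T)) L < \<epsilon>) (at T within {a0..T})"
    unfolding eventually_at
  proof (intro exI[of _ "T - max a0 b"] conjI ballI impI)
    show "T - max a0 b > 0" using a0 b by simp
    fix y assume yS: "y \<in> {a0..T}" and yy: "y \<noteq> T \<and> dist y T < T - max a0 b"
    have y: "max a0 b < y" "y < T" using yS yy by (auto simp: dist_real_def)
    have q: "\<bar>L0 - f y - L * (T - y)\<bar> \<le> \<epsilon>/2 * (T - y)" by (rule left_quot[OF a0 d fL e y])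
    have Hy: "H y = f y" using Hf y yS by auto
    have "(H y - H T) / (y - T) - L = (L0 - f y - L * (T - y)) / (T - y)"
      unfolding Hy HT using y by (simp add: field_simps)
    then have "\<bar>(H y - H T) / (y - T) - L\<bar> = \<bar>L0 - f y - L * (T - y)\<bar> / (T - y)" using y by simp
    also have "\<dots> \<le> \<epsilon>/2" using q y by (simp add: divide_le_eq)
    also have "\<dots> < \<epsilon>" using \<epsilon> by simp
    finally show "dist ((H y - H T) / (y - T)) L < \<epsilon>" by (simp add: dist_real_def)
  qed
qed

lemma mono_lim:
  fixes g :: "real \<Rightarrow> real"
  assumes t0T: "t0 < T" and mono: "\<And>x y. t0 \<le> x \<Longrightarrow> x \<le> y \<Longrightarrow> y < T \<Longrightarrow> g x \<le> g y"
    and bnd: "\<And>x. t0 \<le> x \<Longrightarrow> x < T \<Longrightarrow> g x \<le> B"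
  shows "(g \<longlongrightarrow> Sup (g ` {t0..<T})) (at_left T)" "\<And>x. t0 \<le> x \<Longrightarrow> x < T \<Longrightarrow> g x \<le> Sup (g ` {t0..<T})"
proof -
  let ?S = "Sup (g ` {t0..<T})"
  have ne: "g ` {t0..<T} \<noteq> {}" using t0T by auto
  have bdd: "bdd_above (g ` {t0..<T})" using bnd by (auto intro!: bdd_aboveI)
  show le: "\<And>x. t0 \<le> x \<Longrightarrow> x < T \<Longrightarrow> g x \<le> ?S" using bdd by (auto intro!: cSUP_upper)
  show "(g \<longlongrightarrow> ?S) (at_left T)"
  proof (rule order_tendstoI)
    fix a assume "a < ?S"
    have ne': "{t0..<T} \<noteq> {}" using t0T by simp
    obtain x where x: "x \<in> {t0..<T}" "a < g x" using less_cSUP_iff[OF ne' bdd] \<open>a < ?S\<close> by blast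
    have "eventually (\<lambda>y. y \<in> {x<..<T}) (at_left T)" using eventually_at_left_real x by simp
    then show "eventually (\<lambda>y. a < g y) (at_left T)"
    proof (rule eventually_mono)
      fix y assume "y \<in> {x<..<T}"
      then have "g x \<le> g y" using x by (intro mono) auto
      then show "a < g y" using x by simp
    qed
  next
    fix a assume "?S < a"
    have "eventually (\<lambda>y. y \<in> {t0<..<T}) (at_left T)" using eventually_at_left_real t0T by simp
    then show "eventually (\<lambda>y. g y < a) (at_left T)"
    proof (rule eventually_mono)
      fix y assume "y \<in> {t0<..<T}"
      then have "g y \<le> ?S" by (intro le) auto
      then show "g y < a" using \<open>?S < a\<close> by simp
    qed
  qed
qed


lemma at_left_within: "(F \<longlongrightarrow> l) (at_left x) \<Longrightarrow> (F \<longlongrightarrow> l) (at (x::real) within {a..x})"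
proof -
  assume F: "(F \<longlongrightarrow> l) (at_left x)"
  have "at x within {a..x} = at x within {a..<x}"
    by (rule at_within_nhd[of _ UNIV]) auto
  moreover have "(F \<longlongrightarrow> l) (at x within {a..<x})"
    by (rule tendsto_within_subset[OF F]) auto
  ultimately show ?thesis by simp
qed




lemma W_alg:
  fixes P x u y z a b c C :: real
  assumes "x > 0" "u > 0" and z: "z = -a/x*y + b/x^2*(u-1)*u + c*y^2/u"
  shows "a * (P/x) * (y/u) + ((z*u - y*(0+y))/(u*u)) * P - C*((a-1)*(P/x^2))
       = (P/x^2) * (b*(u-1) + (c-1)*(x*y/u)^2 - C*(a-1))"
  using assms(1,2) unfolding z by (simp add: field_simps power2_eq_square)

context sol begin

lemma two_powr_ge1: "2 powr (1/(a-1)) \<ge> 1"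
  using ha by (intro ge_one_powr_ge_zero) auto

definition pp :: "real \<Rightarrow> real" where "pp t = t * f1 t / (1 + f t)"

definition EV :: "(real \<Rightarrow> bool) \<Rightarrow> bool" where
  "EV P \<longleftrightarrow> (\<exists>T\<in>I. \<forall>t\<in>I. T \<le> t \<longrightarrow> P t)"

lemma EV_conj: "EV P \<Longrightarrow> EV Q \<Longrightarrow> EV (\<lambda>t. P t \<and> Q t)"
  unfolding EV_def by (metis max.bounded_iff max_def)

lemma EV_mono: "EV P \<Longrightarrow> (\<And>t. t \<in> I \<Longrightarrow> P t \<Longrightarrow> Q t) \<Longrightarrow> EV Q"
  unfolding EV_def by blast

lemma p_lower: assumes t1: "t1 \<in> I" and t: "t \<in> I" and le: "t1 \<le> t"
  shows "t powr (a-1) * pp t \<ge> b * f t1 / (a-1) * (t powr (a-1) - t1 powr (a-1))"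
proof -
  define C where "C = b * f t1 / (a-1)"
  define W where "W x = x powr a * (f1 x / (1 + f x)) - C * x powr (a-1)" for x
  define W' where "W' x = x powr (a-2) * (b * f x + (c-1)*(x * f1 x/(1+f x))^2 - b * f t1)" for x
  have d: "\<forall>x\<in>I. (W has_real_derivative W' x) (at x within I)"
  proof
    fix x assume x: "x \<in> I"
    have ft: "1 + f x > 0" using f_pos[OF x] by simp
    have xp: "x > 0" using tpos[OF x] .
    have d1: "(f has_real_derivative f1 x) (at x within I)" using hf1 x by blast
    have d2: "(f1 has_real_derivative f2 x) (at x within I)" using hf2 x by blast
    have a0: "((\<lambda>t. 1 + f t) has_real_derivative (0 + f1 x)) (at x within I)"
      by (rule DERIV_add[OF DERIV_const d1])
    have a1: "((\<lambda>t. t powr a) has_real_derivative a * x powr (a - 1)) (at x within I)"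
      using has_real_derivative_powr[OF xp] has_field_derivative_at_within by blast
    have a2: "((\<lambda>t. t powr (a-1)) has_real_derivative (a-1) * x powr (a - 1 - 1)) (at x within I)"
      using has_real_derivative_powr[OF xp] has_field_derivative_at_within by blast
    have D: "(W has_real_derivative
        (a * x powr (a - 1)) * (f1 x / (1 + f x)) + ((f2 x * (1 + f x) - f1 x * (0 + f1 x)) / ((1 + f x) * (1 + f x))) * x powr a
         - C * ((a-1) * x powr (a - 1 - 1))) (at x within I)"
      unfolding W_def[abs_def]
      by (intro DERIV_diff DERIV_mult DERIV_cmult DERIV_divide a0 a1 a2 d2) (use ft in auto)
    have e1: "x powr (a - 1) = x powr a / x" using xp by (simp add: powr_diff)
    have e2: "x powr (a - 1 - 1) = x powr a / x^2" using xp by (simp add: powr_diff power2_eq_square)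
    have e3: "x powr (a - 2) = x powr a / x^2" using xp by (simp add: powr_diff power2_eq_square)
    have "a * (x powr a/x) * (f1 x/(1 + f x)) + ((f2 x*(1 + f x) - f1 x*(0+f1 x))/((1 + f x)*(1 + f x))) * x powr a - C*((a-1)*(x powr a/x^2))
       = (x powr a/x^2) * (b*((1 + f x)-1) + (c-1)*(x*f1 x/(1 + f x))^2 - C*(a-1))"
      by (rule W_alg[OF xp ft]) (simp add: f2_eq[OF x])
    moreover have "C * (a-1) = b * f t1" unfolding C_def using ha by simp
    ultimately show "(W has_real_derivative W' x) (at x within I)"
      using D unfolding W'_def e1 e2 e3 by simp
  qed
  have "W t1 \<le> W t"
  proof (rule mono_ivl[OF d t1 t le])
    fix x assume x: "t1 < x" "x < t"
    then have xI: "x \<in> I" using ivl_between[OF t1 t] by auto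
    have "f t1 \<le> f x" using f_mono[OF t1 xI] x by simp
    then have "b * f t1 \<le> b * f x" using hb by simp
    moreover have "0 \<le> (c-1)*(x * f1 x/(1+f x))^2" using hc1 by simp
    ultimately show "0 \<le> W' x" unfolding W'_def using tpos[OF xI]
      by (intro mult_nonneg_nonneg) auto
  qed
  moreover have "W t1 \<ge> - C * t1 powr (a-1)"
    unfolding W_def using f1_pos[OF t1] f_pos[OF t1] tpos[OF t1] by simp
  moreover have "x powr a * (f1 x / (1 + f x)) = x powr (a-1) * pp x" if "x > 0" for x
    using that unfolding pp_def by (simp add: powr_diff field_simps)
  ultimately show ?thesis unfolding W_def C_def using tpos[OF t] tpos[OF t1] by (simp add: algebra_simps)
qed


lemma u_growth: assumes s: "s \<in> I" and t: "t \<in> I" and le: "s \<le> t"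
  and pm: "\<And>x. s < x \<Longrightarrow> x < t \<Longrightarrow> pp x \<ge> m"
  shows "ln (1 + f t) - ln (1 + f s) \<ge> m * (ln t - ln s)"
proof -
  define V where "V x = ln (1 + f x) - m * ln x" for x
  define V' where "V' x = inverse (1 + f x) * (0 + f1 x) - m * inverse x" for x
  have d: "\<forall>x\<in>I. (V has_real_derivative V' x) (at x within I)"
  proof
    fix x assume x: "x \<in> I"
    have ft: "1 + f x > 0" using f_pos[OF x] by simp
    have xp: "x > 0" using tpos[OF x] .
    have d1: "(f has_real_derivative f1 x) (at x within I)" using hf1 x by blast
    have a0: "((\<lambda>t. 1 + f t) has_real_derivative (0 + f1 x)) (at x within I)"
      by (rule DERIV_add[OF DERIV_const d1])
    show "(V has_real_derivative V' x) (at x within I)"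
      unfolding V_def[abs_def] V'_def
      by (intro DERIV_diff DERIV_cmult DERIV_chain2[OF DERIV_ln[OF ft] a0]
            has_field_derivative_at_within[OF DERIV_ln[OF xp]])
  qed
  have "V s \<le> V t"
  proof (rule mono_ivl[OF d s t le])
    fix x assume x: "s < x" "x < t"
    then have xI: "x \<in> I" using ivl_between[OF s t] by auto
    have ft: "1 + f x > 0" using f_pos[OF xI] by simp
    have xp: "x > 0" using tpos[OF xI] .
    have "m \<le> x * f1 x / (1 + f x)" using pm[OF x] unfolding pp_def .
    then have "m / x \<le> f1 x / (1 + f x)" using xp ft by (simp add: field_simps)
    then show "0 \<le> V' x" unfolding V'_def by (simp add: divide_inverse mult.commute)
  qed
  then show ?thesis unfolding V_def by (simp add: algebra_simps)
qed

lemma inf_I: "tm = \<infinity> \<Longrightarrow> t0 \<le> t \<Longrightarrow> t \<in> I"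
  by (simp add: ivl_def)

lemma inf_p_big: assumes inf: "tm = \<infinity>" and t1: "t1 \<in> I" and t: "t \<ge> 2 powr (1/(a-1)) * t1"
  shows "pp t \<ge> b * f t1 / (2*(a-1))"
proof -
  have t1p: "t1 > 0" using tpos[OF t1] .
  have "2 powr (1/(a-1)) \<ge> 1" by (rule two_powr_ge1)
  then have "2 powr (1/(a-1)) * t1 \<ge> 1 * t1" using t1p by (intro mult_right_mono) auto
  then have "t \<ge> t1" using t by simp
  then have tI: "t \<in> I" using inf t1 by (simp add: ivl_def)
  have tp: "t > 0" using tpos[OF tI] .
  have "(2 powr (1/(a-1)) * t1) powr (a-1) \<le> t powr (a-1)"
    using t ha t1p by (intro powr_mono2) auto
  moreover have "(2 powr (1/(a-1)) * t1) powr (a-1) = 2 * t1 powr (a-1)"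
    using ha t1p by (simp add: powr_mult powr_powr)
  ultimately have le2: "2 * t1 powr (a-1) \<le> t powr (a-1)" by simp
  have pl: "t powr (a-1) * pp t \<ge> b * f t1 / (a-1) * (t powr (a-1) - t1 powr (a-1))"
    using p_lower[OF t1 tI \<open>t \<ge> t1\<close>] .
  have C0: "b * f t1 / (a-1) \<ge> 0" using hb f_pos[OF t1] ha by simp
  have "b * f t1 / (a-1) * (t powr (a-1) / 2) \<le> b * f t1 / (a-1) * (t powr (a-1) - t1 powr (a-1))"
    using le2 C0 by (intro mult_left_mono) auto
  then have "t powr (a-1) * (b * f t1 / (2*(a-1))) \<le> t powr (a-1) * pp t"
    using pl by (simp add: field_simps)
  moreover have "t powr (a-1) > 0" using tp by simp
  ultimately show ?thesis by (meson mult_le_cancel_left_pos)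
qed

lemma inf_f_big: assumes inf: "tm = \<infinity>" shows "EV (\<lambda>t. f t \<ge> M)"
proof -
  define m where "m = b * \<beta> / (2*(a-1))"
  define T0 where "T0 = 2 powr (1/(a-1)) * t0"
  have mp: "m > 0" unfolding m_def using hb h\<beta> ha by simp
  have T0ge: "T0 \<ge> t0" unfolding T0_def using two_powr_ge1 ht0 by simp
  have T0I: "T0 \<in> I" using inf_I[OF inf T0ge] .
  have pbig: "pp x \<ge> m" if "x \<ge> T0" for x
    using inf_p_big[OF inf t0I, of x] that hinit unfolding m_def T0_def by simp
  define T where "T = T0 * exp ((max 0 (ln (1 + M))) / m)"
  have TT0: "T \<ge> T0" unfolding T_def using T0ge ht0 mp by simp
  have TI: "T \<in> I" using inf_I[OF inf] TT0 T0ge by simp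
  show ?thesis unfolding EV_def
  proof (intro bexI[OF _ TI] ballI impI)
    fix t assume tI: "t \<in> I" and Tt: "T \<le> t"
    have "ln (1 + f t) - ln (1 + f T0) \<ge> m * (ln t - ln T0)"
      by (rule u_growth[OF T0I tI]) (use Tt TT0 pbig in auto)
    moreover have "ln (1 + f T0) \<ge> 0" using f_pos[OF T0I] by simp
    moreover have "ln t - ln T0 \<ge> ln T - ln T0" using Tt TT0 T0ge ht0 by simp
    moreover have "ln T - ln T0 = max 0 (ln (1 + M)) / m" unfolding T_def
      using T0ge ht0 by (simp add: ln_mult)
    ultimately have h1: "ln (1 + f t) \<ge> m * (max 0 (ln (1 + M)) / m)"
      using mp mult_left_mono[of "max 0 (ln (1 + M)) / m" "ln t - ln T0" m] by linarith
    have "m * (max 0 (ln (1 + M)) / m) = max 0 (ln (1 + M))" using mp by simp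
    with h1 have h2: "ln (1 + f t) \<ge> ln (1 + M)" by linarith
    show "f t \<ge> M"
    proof (cases "1 + M > 0")
      case True
      then show ?thesis using h2 f_pos[OF tI] by simp
    next
      case False
      then show ?thesis using f_pos[OF tI] by simp
    qed
  qed
qed


lemma inf_p_infty: assumes inf: "tm = \<infinity>" shows "EV (\<lambda>t. pp t \<ge> P)"
proof -
  obtain T1 where T1: "T1 \<in> I" "\<forall>t\<in>I. T1 \<le> t \<longrightarrow> f t \<ge> 2*(a-1)*P/b"
    using inf_f_big[OF inf] unfolding EV_def by blast
  define T where "T = 2 powr (1/(a-1)) * T1"
  have "T \<ge> T1" unfolding T_def using two_powr_ge1 tpos[OF T1(1)]
    by (metis mult_le_cancel_right1 less_le_not_le)
  then have TI: "T \<in> I" using T1(1) inf by (simp add: ivl_def)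
  show ?thesis unfolding EV_def
  proof (intro bexI[OF _ TI] ballI impI)
    fix t assume "t \<in> I" "T \<le> t"
    then have "pp t \<ge> b * f T1 / (2*(a-1))" using inf_p_big[OF inf T1(1)] unfolding T_def by simp
    moreover have "f T1 \<ge> 2*(a-1)*P/b" using T1 by simp
    then have "b * f T1 / (2*(a-1)) \<ge> P" using hb ha by (simp add: field_simps)
    ultimately show "pp t \<ge> P" by simp
  qed
qed

lemma inf_ratio: assumes inf: "tm = \<infinity>" and l: "0 < l" "l < 1" and r: "0 < \<rho>" "\<rho> < 1"
  shows "EV (\<lambda>t. 1 + f (max t0 (l*t)) \<le> \<rho> * (1 + f t))"
proof -
  define P where "P = ln (1/\<rho>) / ln (1/l)"
  have lnl: "ln (1/l) > 0" using l by simp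
  obtain T1 where T1: "T1 \<in> I" "\<forall>t\<in>I. T1 \<le> t \<longrightarrow> pp t \<ge> P"
    using inf_p_infty[OF inf] unfolding EV_def by blast
  define T where "T = max T1 t0 / l"
  have T1p: "T1 > 0" using tpos[OF T1(1)] .
  have "max T1 t0 * l \<le> max T1 t0" using l ht0 T1p by (intro mult_left_le) auto
  then have "max T1 t0 \<le> T" unfolding T_def using l by (simp add: le_divide_eq)
  then have TI: "T \<in> I" using inf by (simp add: ivl_def)
  show ?thesis unfolding EV_def
  proof (intro bexI[OF _ TI] ballI impI)
    fix t assume tI: "t \<in> I" and Tt: "T \<le> t"
    have tp: "t > 0" using tpos[OF tI] .
    have lt: "l * t \<ge> max T1 t0" using Tt l unfolding T_def by (simp add: field_simps)
    then have mx: "max t0 (l*t) = l * t" by simp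
    have sI: "l * t \<in> I" using lt inf by (simp add: ivl_def)
    have st: "l * t \<le> t" using l tp by simp
    have "ln (1 + f t) - ln (1 + f (l*t)) \<ge> P * (ln t - ln (l*t))"
      by (rule u_growth[OF sI tI st]) (use T1 lt ivl_between[OF sI tI] in auto)
    moreover have "ln t - ln (l*t) = ln (1/l)" using l tp by (simp add: ln_mult ln_div)
    moreover have "P * ln (1/l) = ln (1/\<rho>)" unfolding P_def using lnl by simp
    ultimately have "ln (1 + f t) - ln (1 + f (l*t)) \<ge> ln (1/\<rho>)" by simp
    then have "ln (1 + f (l*t)) \<le> ln (\<rho> * (1 + f t))"
      using r f_pos[OF tI] by (simp add: ln_mult ln_div)
    then have "1 + f (l*t) \<le> \<rho> * (1 + f t)"
      using r f_pos[OF tI] f_pos[OF sI] by simp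
    then show "1 + f (max t0 (l*t)) \<le> \<rho> * (1 + f t)" using mx by simp
  qed
qed


definition KH :: real where "KH = 1/(3-2*c) + 1/(2*c-2)"

lemma H_lower: "y \<ge> 0 \<Longrightarrow> H y \<ge> (1+y) powr (3-2*c) / (3-2*c)"
  unfolding H_def using hc1 by simp

lemma H_upper: assumes "y \<ge> 0" shows "H y \<le> KH * (1+y) powr (3-2*c)"
proof -
  have "(1+y) powr (2-2*c) \<le> (1+y) powr (3-2*c)" using assms by (intro powr_mono) auto
  then have "(1+y) powr (2-2*c) / (2*c-2) \<le> (1+y) powr (3-2*c) / (2*c-2)"
    using hc1 by (intro divide_right_mono) auto
  then show ?thesis unfolding H_def KH_def by (simp add: algebra_simps add_divide_distrib)
qed

lemma key: assumes t: "t \<in> I" and l: "0 < l" "l < 1" and r: "0 < \<rho>"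
  and rat: "1 + f (max t0 (l*t)) \<le> \<rho> * (1 + f t)"
  and B: "1/(3-2*c) - KH * \<rho> powr (3-2*c) \<ge> 0"
  shows "t\<^sup>2 * (f1 t)\<^sup>2 \<ge> 2*b*l powr (2*a-2) * (1/(3-2*c) - KH * \<rho> powr (3-2*c)) * (1 + f t) ^ 3"
proof -
  define qq where "qq = max t0 (l*t)"
  define B where "B = 1/(3-2*c) - KH * \<rho> powr (3-2*c)"
  have tp: "t > 0" using tpos[OF t] .
  have st: "qq \<le> t" unfolding qq_def using t l tp by (auto simp: ivl_def)
  have sI: "qq \<in> I" using ivl_between[OF t0I t, of qq] st unfolding qq_def by auto
  have sp: "qq > 0" using tpos[OF sI] .
  have ft: "f t > 0" using f_pos[OF t] by simp
  have fs: "f qq > 0" using f_pos[OF sI] by simp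
  have El: "E t - E qq \<ge> 2*b*qq powr (2*a-2) * (H (f t) - H (f qq))" using E_lower[OF sI t st] .
  have Es: "E qq \<ge> 0" unfolding E_def by simp
  have Hdiff: "H (f t) - H (f qq) \<ge> B * (1 + f t) powr (3-2*c)"
  proof -
    have "(1 + f qq) powr (3-2*c) \<le> (\<rho> * (1 + f t)) powr (3-2*c)"
      using rat fs hc2 unfolding qq_def by (intro powr_mono2) auto
    also have "\<dots> = \<rho> powr (3-2*c) * (1 + f t) powr (3-2*c)" using r ft by (simp add: powr_mult)
    finally have "KH * (1 + f qq) powr (3-2*c) \<le> KH * (\<rho> powr (3-2*c) * (1 + f t) powr (3-2*c))"
      using hc1 hc2 unfolding KH_def by (intro mult_left_mono) auto
    then have "H (f qq) \<le> KH * \<rho> powr (3-2*c) * (1 + f t) powr (3-2*c)"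
      using H_upper[of "f qq"] fs by simp
    moreover have "H (f t) \<ge> (1 + f t) powr (3-2*c) / (3-2*c)" using H_lower ft by simp
    ultimately show ?thesis unfolding B_def by (simp add: algebra_simps)
  qed
  have spow: "qq powr (2*a-2) \<ge> l powr (2*a-2) * t powr (2*a-2)"
  proof -
    have "(l*t) powr (2*a-2) \<le> qq powr (2*a-2)" unfolding qq_def using l tp ha by (intro powr_mono2) auto
    then show ?thesis using l tp by (simp add: powr_mult)
  qed
  have B0: "B \<ge> 0" using assms(6) unfolding B_def .
  have Pt: "(1 + f t) powr (3-2*c) \<ge> 0" by simp
  have "E t \<ge> 2*b*qq powr (2*a-2) * (B * (1 + f t) powr (3-2*c))"
  proof -
    have "2*b*qq powr (2*a-2) * (B * (1 + f t) powr (3-2*c)) \<le> 2*b*qq powr (2*a-2) * (H (f t) - H (f qq))"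
      using Hdiff hb by (intro mult_left_mono) auto
    then show ?thesis using El Es by linarith
  qed
  moreover have "2*b*qq powr (2*a-2) * (B * (1 + f t) powr (3-2*c)) \<ge> 2*b*(l powr (2*a-2) * t powr (2*a-2)) * (B * (1 + f t) powr (3-2*c))"
    using spow hb B0 Pt by (intro mult_right_mono mult_left_mono mult_nonneg_nonneg) auto
  ultimately have Et: "E t \<ge> 2*b*l powr (2*a-2) * B * t powr (2*a-2) * (1 + f t) powr (3-2*c)"
    by (simp add: algebra_simps)
  have eq: "t\<^sup>2 * (f1 t)\<^sup>2 = E t * (1 + f t) powr (2*c) / t powr (2*a-2)"
    unfolding E_def using tp ft by (simp add: powr_diff field_simps)
  have P: "(1 + f t) powr (3-2*c) * (1 + f t) powr (2*c) = (1 + f t) ^ 3"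
    using ft by (simp add: powr_add[symmetric] powr_realpow)
  have "2*b*l powr (2*a-2) * B * t powr (2*a-2) * (1 + f t) powr (3-2*c) * (1 + f t) powr (2*c) / t powr (2*a-2)
     \<le> E t * (1 + f t) powr (2*c) / t powr (2*a-2)"
    using Et tp by (intro divide_right_mono mult_right_mono) auto
  moreover have "2*b*l powr (2*a-2) * B * t powr (2*a-2) * (1 + f t) powr (3-2*c) * (1 + f t) powr (2*c) / t powr (2*a-2)
     = 2*b*l powr (2*a-2) * B * (1 + f t) ^ 3"
    using tp P by (simp add: field_simps)
  ultimately show ?thesis unfolding eq B_def by simp
qed


lemma tm_cases: obtains (inf) "tm = \<infinity>" | (fin) T where "tm = ereal T" "t0 < T"
  using htm by (cases tm) auto

lemma EV_filter: assumes "EV P" shows "eventually P (to_tm tm)"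
proof -
  obtain T where T: "T \<in> I" "\<forall>t\<in>I. T \<le> t \<longrightarrow> P t" using assms unfolding EV_def by blast
  show ?thesis
  proof (cases rule: tm_cases)
    case inf
    have "\<forall>n\<ge>T. P n" using T inf by (auto simp: ivl_def)
    then show ?thesis unfolding to_tm_def using inf eventually_at_top_linorder by auto
  next
    case (fin T')
    have TT: "T < T'" using T(1) fin by (simp add: ivl_def)
    have "eventually (\<lambda>x. x \<in> {T<..<T'}) (at_left T')" using eventually_at_left_real[OF TT] .
    then have "eventually P (at_left T')"
    proof (rule eventually_mono)
      fix x assume "x \<in> {T<..<T'}"
      then have "x \<in> I" "T \<le> x" using T(1) fin by (auto simp: ivl_def)
      then show "P x" using T(2) by blast
    qed
    then show ?thesis unfolding to_tm_def using fin by simp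
  qed
qed

lemma fin_ratio: assumes fin: "tm = ereal T" and fbig: "\<And>M. EV (\<lambda>t. f t \<ge> M)"
  and l: "0 < l" "l < 1" and r: "0 < \<rho>"
  shows "EV (\<lambda>t. 1 + f (max t0 (l*t)) \<le> \<rho> * (1 + f t))"
proof -
  have tT: "t0 < T" using htm fin by simp
  define S0 where "S0 = max t0 (l*T)"
  have S0T: "S0 < T" unfolding S0_def using tT l ht0 by auto
  have S0I: "S0 \<in> I" using S0T fin unfolding S0_def by (simp add: ivl_def)
  show ?thesis
    using fbig[of "(1 + f S0)/\<rho> - 1"]
  proof (rule EV_mono)
    fix t assume tI: "t \<in> I" and ft: "(1 + f S0)/\<rho> - 1 \<le> f t"
    have tT': "t < T" using tI fin by (simp add: ivl_def)
    have "l*t \<le> l*T" using tT' l by simp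
    then have le: "max t0 (l*t) \<le> S0" unfolding S0_def by auto
    have mI: "max t0 (l*t) \<in> I" using ivl_between[OF t0I S0I, of "max t0 (l*t)"] le by simp
    have "f (max t0 (l*t)) \<le> f S0" using f_mono[OF mI S0I le] .
    moreover have "1 + f S0 \<le> \<rho> * (1 + f t)" using ft r by (simp add: field_simps)
    ultimately show "1 + f (max t0 (l*t)) \<le> \<rho> * (1 + f t)" by simp
  qed
qed

definition kk :: "real \<Rightarrow> real" where "kk s = f s * (1 + f s) / (s\<^sup>2 * f1 s)"
definition J :: "real \<Rightarrow> real" where "J t = integral {t0..t} kk"

lemma kk_cont: "continuous_on I kk"
proof -
  have "continuous_on I (\<lambda>s. f s * (1 + f s) / (s\<^sup>2 * f1 s))"
  proof (intro continuous_intros f_cont f1_cont ballI)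
    fix x assume "x \<in> I" then show "x\<^sup>2 * f1 x \<noteq> 0" using tpos f1_pos by (metis mult_pos_pos less_irrefl zero_less_power)
  qed
  then show ?thesis unfolding kk_def[abs_def] .
qed

lemma J_deriv: assumes t: "t \<in> I" shows "(J has_real_derivative kk t) (at t within I)"
proof -
  have "ereal t < tm" using t by (simp add: ivl_def)
  then obtain r where r: "ereal t < ereal r" "ereal r < tm" using ereal_dense2 by blast
  have sub: "{t0..r} \<subseteq> I" by (auto simp: ivl_def intro!: le_less_trans[OF _ r(2)])
  have tr: "t \<in> {t0..r}" using t r by (auto simp: ivl_def)
  have "((\<lambda>u. integral {t0..u} kk) has_vector_derivative kk t) (at t within {t0..r})"
    by (rule integral_has_vector_derivative[OF continuous_on_subset[OF kk_cont sub] tr])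
  then have D: "(J has_real_derivative kk t) (at t within {t0..r})"
    unfolding J_def[abs_def] by (simp add: has_real_derivative_iff_has_vector_derivative)
  have "at t within {t0..r} = at t within I"
  proof (rule at_within_nhd[of _ "{..<r}"])
    show "t \<in> {..<r}" using r by simp
    show "open {..<r}" by simp
    show "{t0..r} \<inter> {..<r} - {t} = I \<inter> {..<r} - {t}"
      by (auto simp: ivl_def intro!: le_less_trans[OF _ r(2)])
  qed
  then show ?thesis using D by simp
qed

lemma J_cont: "continuous_on I J" using deriv_cont_on J_deriv by blast

end



lemma cube_bound: fixes d :: real assumes "0 \<le> d" "d \<le> 1" shows "(1-d)^3 \<ge> 1 - 3*d"
proof -
  have "(1-d)^3 - (1 - 3*d) = d^2 * (3 - d)" by (simp add: power3_eq_cube power2_eq_square algebra_simps)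
  moreover have "d^2 * (3 - d) \<ge> 0" using assms by simp
  ultimately show ?thesis by simp
qed

lemma psi_alg: fixes E P K u y e :: real assumes "u > 0"
  shows "E * K * P + (e-1) * (P/u) * (0 + y) * E = E * P * (K - (1-e) * (y/u))"
  using assms by (simp add: field_simps)

context sol begin

lemma params:
  assumes hA: "A > 0" and h\<theta>: "\<theta> \<ge> 1" and hA\<theta>: "A * \<theta> < 2 * b / (3 - 2 * c)"
  obtains \<epsilon> l \<rho> where "0 < \<epsilon>" "\<epsilon> < 1" "0 < l" "l < 1" "0 < \<rho>" "\<rho> < 1"
    "1/(3-2*c) - KH * \<rho> powr (3-2*c) \<ge> 0"
    "A * \<theta> \<le> (1 - \<epsilon>) * (2*b*l powr (2*a-2) * (1/(3-2*c) - KH * \<rho> powr (3-2*c)))"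
proof -
  have c3: "3 - 2*c > 0" "2*c - 2 > 0" using hc1 hc2 by auto
  define \<gamma> where "\<gamma> = A * \<theta> * (3-2*c) / (2*b)"
  have g0: "\<gamma> > 0" unfolding \<gamma>_def using hA h\<theta> c3 hb by simp
  have g1: "\<gamma> < 1" unfolding \<gamma>_def using hA\<theta> c3 hb by (simp add: field_simps)
  define \<delta> where "\<delta> = (1 - \<gamma>)/4"
  have d0: "0 < \<delta>" "\<delta> < 1/4" unfolding \<delta>_def using g0 g1 by auto
  define l where "l = (1 - \<delta>) powr (1/(2*a-2))"
  have l0: "l > 0" unfolding l_def using d0 by simp
  have lpow: "l powr (2*a-2) = 1 - \<delta>" unfolding l_def using d0 ha by (simp add: powr_powr)
  have l1: "l < 1"
  proof (rule ccontr)
    assume "\<not> l < 1"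
    then have "l powr (2*a-2) \<ge> 1" using ha by (intro ge_one_powr_ge_zero) auto
    then show False using lpow d0 by simp
  qed
  have KH1: "KH * (3-2*c) > 1"
  proof -
    have "KH * (3-2*c) = 1/(3-2*c) * (3-2*c) + 1/(2*c-2) * (3-2*c)" unfolding KH_def by (simp add: distrib_right)
    then have "KH * (3-2*c) = 1 + (3-2*c)/(2*c-2)" using c3 by simp
    moreover have "(3-2*c)/(2*c-2) > 0" using c3 by simp
    ultimately show ?thesis by simp
  qed
  define q where "q = \<delta> / (KH * (3-2*c))"
  have q0: "q > 0" "q < 1" unfolding q_def using d0 KH1 by (auto simp: field_simps)
  define \<rho> where "\<rho> = q powr (1/(3-2*c))"
  have r0: "\<rho> > 0" unfolding \<rho>_def using q0 by simp
  have rpow: "\<rho> powr (3-2*c) = q" unfolding \<rho>_def using q0 c3 by (simp add: powr_powr)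
  have r1: "\<rho> < 1"
  proof (rule ccontr)
    assume "\<not> \<rho> < 1"
    then have "\<rho> powr (3-2*c) \<ge> 1" using c3 by (intro ge_one_powr_ge_zero) auto
    then show False using rpow q0 by simp
  qed
  have KHpos: "KH > 0" using KH1 c3 by (smt (verit) mult_nonpos_nonneg)
  have Beq: "1/(3-2*c) - KH * \<rho> powr (3-2*c) = (1 - \<delta>)/(3-2*c)"
  proof -
    have "KH * (\<delta> / (KH * (3-2*c))) = \<delta>/(3-2*c)" using KHpos by simp
    then show ?thesis unfolding rpow q_def by (simp add: diff_divide_distrib)
  qed
  have cb0: "(1-\<delta>)^3 \<ge> 1 - 3*\<delta>" using cube_bound[of \<delta>] d0 by simp
  have "1 - 3*\<delta> \<ge> \<gamma>" unfolding \<delta>_def using g1 by (simp add: field_simps)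
  with cb0 have cb: "(1-\<delta>)^3 \<ge> \<gamma>" by linarith
  have "A * \<theta> = \<gamma> * (2*b/(3-2*c))" unfolding \<gamma>_def using hb c3 by (simp add: field_simps)
  also have "\<dots> \<le> (1-\<delta>)^3 * (2*b/(3-2*c))" using cb hb c3 by (intro mult_right_mono) auto
  also have "\<dots> = (1 - \<delta>) * (2*b*l powr (2*a-2) * (1/(3-2*c) - KH * \<rho> powr (3-2*c)))"
    unfolding Beq lpow by (simp add: power3_eq_cube field_simps)
  finally have fin: "A * \<theta> \<le> (1 - \<delta>) * (2*b*l powr (2*a-2) * (1/(3-2*c) - KH * \<rho> powr (3-2*c)))" .
  show ?thesis
    by (rule that[of \<delta> l \<rho>]) (use d0 l0 l1 r0 r1 Beq c3 fin in auto)
qed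


lemma EV_kk:
  assumes ratio: "\<And>l \<rho>. 0 < l \<Longrightarrow> l < 1 \<Longrightarrow> 0 < \<rho> \<Longrightarrow> \<rho> < 1 \<Longrightarrow> EV (\<lambda>t. 1 + f (max t0 (l*t)) \<le> \<rho> * (1 + f t))"
  and p: "0 < \<epsilon>" "\<epsilon> < 1" "0 < l" "l < 1" "0 < \<rho>" "\<rho> < 1"
    "1/(3-2*c) - KH * \<rho> powr (3-2*c) \<ge> 0"
    "A * \<theta> \<le> (1 - \<epsilon>) * (2*b*l powr (2*a-2) * (1/(3-2*c) - KH * \<rho> powr (3-2*c)))"
  and hA: "A > 0" and h\<theta>: "\<theta> \<ge> 1"
  shows "EV (\<lambda>t. A*\<theta>*kk t \<le> (1-\<epsilon>) * (f1 t/(1+f t)))"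
  using ratio[OF p(3-6)]
proof (rule EV_mono)
  fix t assume t: "t \<in> I" and rat: "1 + f (max t0 (l*t)) \<le> \<rho> * (1 + f t)"
  define Q where "Q = 2*b*l powr (2*a-2) * (1/(3-2*c) - KH * \<rho> powr (3-2*c))"
  have K: "t\<^sup>2 * (f1 t)\<^sup>2 \<ge> Q * (1 + f t)^3"
    unfolding Q_def using key[OF t p(3,4,5) rat p(7)] .
  have ft: "f t > 0" using f_pos[OF t] .
  have f1t: "f1 t > 0" using f1_pos[OF t] .
  have tp: "t > 0" using tpos[OF t] .
  have Ath0: "A * \<theta> \<ge> 0" using hA h\<theta> by simp
  have "A*\<theta> * (f t * (1 + f t)^2) \<le> A*\<theta> * (1 + f t)^3"
    using Ath0 ft by (intro mult_left_mono) (auto simp: power2_eq_square power3_eq_cube)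
  also have "\<dots> \<le> (1-\<epsilon>) * Q * (1 + f t)^3"
    using p(8) ft unfolding Q_def by (intro mult_right_mono) auto
  also have "\<dots> \<le> (1-\<epsilon>) * (t\<^sup>2 * (f1 t)\<^sup>2)"
    using K p(2) by (simp add: mult.assoc mult_left_mono)
  finally have main: "A*\<theta> * (f t * (1 + f t)^2) \<le> (1-\<epsilon>) * (t\<^sup>2 * (f1 t)\<^sup>2)" .
  have "A*\<theta>*kk t = (A*\<theta> * (f t * (1 + f t)^2)) / (t\<^sup>2 * f1 t * (1 + f t))"
  proof -
    have "(A*\<theta> * (f t * (1 + f t)^2)) / (t\<^sup>2 * f1 t * (1 + f t))
        = (A*\<theta> * (f t * (1 + f t)) * (1 + f t)) / ((t\<^sup>2 * f1 t) * (1 + f t))"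
      by (simp add: power2_eq_square mult.assoc)
    also have "\<dots> = A*\<theta> * (f t * (1 + f t)) / (t\<^sup>2 * f1 t)"
      using ft by (intro mult_divide_mult_cancel_right) simp
    finally show ?thesis unfolding kk_def by simp
  qed
  also have "\<dots> \<le> ((1-\<epsilon>) * (t\<^sup>2 * (f1 t)\<^sup>2)) / (t\<^sup>2 * f1 t * (1 + f t))"
    using main ft tp f1t by (intro divide_right_mono) auto
  also have "\<dots> = (1-\<epsilon>) * (f1 t/(1+f t))"
  proof -
    have "((1-\<epsilon>) * (t\<^sup>2 * (f1 t)\<^sup>2)) / (t\<^sup>2 * f1 t * (1 + f t)) = ((1-\<epsilon>) * f1 t * (t\<^sup>2 * f1 t)) / ((1 + f t) * (t\<^sup>2 * f1 t))"
      by (simp add: power2_eq_square ac_simps)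
    also have "\<dots> = (1-\<epsilon>) * f1 t / (1 + f t)" using tp f1t by (intro mult_divide_mult_cancel_right) simp
    finally show ?thesis by simp
  qed
  finally show "A*\<theta>*kk t \<le> (1-\<epsilon>) * (f1 t/(1+f t))" .
qed


lemma eta_main:
  assumes fbig: "\<And>M. EV (\<lambda>t. f t \<ge> M)"
  and ratio: "\<And>l \<rho>. 0 < l \<Longrightarrow> l < 1 \<Longrightarrow> 0 < \<rho> \<Longrightarrow> \<rho> < 1 \<Longrightarrow> EV (\<lambda>t. 1 + f (max t0 (l*t)) \<le> \<rho> * (1 + f t))"
  and h\<theta>: "\<theta> \<ge> 1" and hA: "A > 0" and hA\<theta>: "A * \<theta> < 2 * b / (3 - 2 * c)"
  shows "let g = (\<lambda>t. exp (- A * integral {t0..t} (\<lambda>s. f s * (1 + f s) / (s\<^sup>2 * f1 s))));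
             \<eta> = (\<lambda>t. 1 / (g t powr \<theta> * (1 + f t)))
         in (\<exists>\<eta>'. (\<forall>t\<in>ivl t0 tm. (\<eta> has_real_derivative \<eta>' t) (at t within ivl t0 tm))
                   \<and> continuous_on (ivl t0 tm) \<eta>')
          \<and> (\<exists>C>0. \<forall>t\<in>ivl t0 tm. 0 < \<eta> t \<and> \<eta> t \<le> C)
          \<and> (\<eta> \<longlongrightarrow> 0) (to_tm tm)"
proof -
  define \<eta> where "\<eta> t = exp (A*\<theta>*J t) / (1 + f t)" for t
  have eta_eq: "(\<lambda>t. 1 / ((\<lambda>t. exp (- A * integral {t0..t} (\<lambda>s. f s * (1 + f s) / (s\<^sup>2 * f1 s)))) t powr \<theta> * (1 + f t))) = \<eta>"
  proof
    fix t
    have J': "integral {t0..t} (\<lambda>s. f s * (1 + f s) / (s\<^sup>2 * f1 s)) = J t"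
      by (simp add: J_def kk_def[abs_def])
    have "exp (- A * J t) powr \<theta> = exp (- (A*\<theta>*J t))" by (simp add: powr_def algebra_simps)
    also have "\<dots> = 1 / exp (A*\<theta>*J t)" by (simp add: exp_minus inverse_eq_divide)
    finally have P: "exp (- A * J t) powr \<theta> = 1 / exp (A*\<theta>*J t)" .
    show "1 / ((\<lambda>t. exp (- A * integral {t0..t} (\<lambda>s. f s * (1 + f s) / (s\<^sup>2 * f1 s)))) t powr \<theta> * (1 + f t)) = \<eta> t"
      unfolding J' P \<eta>_def by simp
  qed
  have fpI: "t \<in> I \<Longrightarrow> 1 + f t > 0" for t using f_pos by fastforce
  define \<eta>' where "\<eta>' t = (exp (A*\<theta>*J t) * (A*\<theta>*kk t) * (1 + f t) - exp (A*\<theta>*J t) * (0 + f1 t)) / ((1 + f t) * (1 + f t))" for t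
  have eD: "((\<lambda>t. exp (A*\<theta>*J t)) has_real_derivative exp (A*\<theta>*J t) * (A*\<theta>*kk t)) (at t within I)" if t: "t \<in> I" for t
    using DERIV_chain2[OF DERIV_exp DERIV_cmult[OF J_deriv[OF t]]] by (simp add: mult.commute)
  have dD: "(\<eta> has_real_derivative \<eta>' t) (at t within I)" if t: "t \<in> I" for t
    unfolding \<eta>_def[abs_def] \<eta>'_def
    by (rule DERIV_divide[OF eD[OF t] DERIV_add[OF DERIV_const]]) (use hf1 t fpI[OF t] in auto)
  have cD: "continuous_on I \<eta>'"
    unfolding \<eta>'_def
    by (intro continuous_intros J_cont kk_cont f_cont f1_cont) (use fpI in \<open>force\<close>)
  obtain \<epsilon> l \<rho> where p: "0 < \<epsilon>" "\<epsilon> < 1" "0 < l" "l < 1" "0 < \<rho>" "\<rho> < 1"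
    "1/(3-2*c) - KH * \<rho> powr (3-2*c) \<ge> 0"
    "A * \<theta> \<le> (1 - \<epsilon>) * (2*b*l powr (2*a-2) * (1/(3-2*c) - KH * \<rho> powr (3-2*c)))"
    using params[OF hA h\<theta> hA\<theta>] by blast
  obtain T1 where T1: "T1 \<in> I" "\<forall>t\<in>I. T1 \<le> t \<longrightarrow> A*\<theta>*kk t \<le> (1-\<epsilon>) * (f1 t/(1+f t))"
    using EV_kk[OF ratio p hA h\<theta>] unfolding EV_def by blast
  define \<psi> where "\<psi> t = exp (A*\<theta>*J t) * (1 + f t) powr (\<epsilon>-1)" for t
  define \<psi>' where "\<psi>' t = exp (A*\<theta>*J t) * (A*\<theta>*kk t) * (1 + f t) powr (\<epsilon>-1)
     + (\<epsilon>-1) * (1 + f t) powr (\<epsilon>-1-1) * (0 + f1 t) * exp (A*\<theta>*J t)" for t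
  have pD: "((\<lambda>t. - \<psi> t) has_real_derivative - \<psi>' t) (at t within I)" if t: "t \<in> I" for t
  proof -
    have a0: "((\<lambda>t. 1 + f t) has_real_derivative (0 + f1 t)) (at t within I)"
      using DERIV_add[OF DERIV_const, of f "f1 t" t I] hf1 t by blast
    show ?thesis unfolding \<psi>_def[abs_def] \<psi>'_def
      by (intro DERIV_minus DERIV_mult eD[OF t] powr_comp_deriv[OF a0 fpI[OF t]])
  qed
  have psi_dec: "\<psi> t \<le> \<psi> T1" if t: "t \<in> I" "T1 \<le> t" for t
  proof -
    have "- \<psi> T1 \<le> - \<psi> t"
    proof (rule mono_ivl[OF _ T1(1) t(1) t(2)])
      show "\<forall>t\<in>I. ((\<lambda>t. - \<psi> t) has_real_derivative - \<psi>' t) (at t within I)" using pD by blast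
      fix x assume x: "T1 < x" "x < t"
      then have xI: "x \<in> I" using ivl_between[OF T1(1) t(1)] by auto
      have fx: "1 + f x > 0" using fpI[OF xI] .
      have kx: "A*\<theta>*kk x \<le> (1-\<epsilon>) * (f1 x/(1+f x))" using T1(2) xI x by auto
      have e2: "(1 + f x) powr (\<epsilon>-1-1) = (1 + f x) powr (\<epsilon>-1) / (1 + f x)"
        using fx by (simp add: powr_diff power2_eq_square)
      have "\<psi>' x = exp (A*\<theta>*J x) * (1 + f x) powr (\<epsilon>-1) * (A*\<theta>*kk x - (1-\<epsilon>) * (f1 x/(1+f x)))"
        unfolding \<psi>'_def e2 by (rule psi_alg[OF fx])
      moreover have "exp (A*\<theta>*J x) * (1 + f x) powr (\<epsilon>-1) \<ge> 0" by simp
      ultimately have "\<psi>' x \<le> 0" using kx by (simp add: mult_nonneg_nonpos)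
      then show "0 \<le> - \<psi>' x" by simp
    qed
    then show ?thesis by simp
  qed
  have eta_psi: "\<eta> t = \<psi> t * (1 + f t) powr (-\<epsilon>)" if t: "t \<in> I" for t
  proof -
    have "(1 + f t) powr (\<epsilon>-1) * (1 + f t) powr (-\<epsilon>) = (1 + f t) powr ((\<epsilon>-1) + (-\<epsilon>))"
      by (simp only: powr_add)
    also have "\<dots> = (1 + f t) powr (-1)" by simp
    also have "\<dots> = 1 / (1 + f t)" using fpI[OF t] by (simp add: powr_minus divide_inverse)
    finally have X: "(1 + f t) powr (\<epsilon>-1) * (1 + f t) powr (-\<epsilon>) = 1 / (1 + f t)" .
    have "\<psi> t * (1 + f t) powr (-\<epsilon>) = exp (A*\<theta>*J t) * ((1 + f t) powr (\<epsilon>-1) * (1 + f t) powr (-\<epsilon>))"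
      unfolding \<psi>_def by (simp only: mult.assoc)
    also have "\<dots> = \<eta> t" unfolding X \<eta>_def by simp
    finally show ?thesis by simp
  qed
  have eta_pos: "\<eta> t > 0" if "t \<in> I" for t unfolding \<eta>_def using fpI[OF that] by simp
  have eta_le: "\<eta> t \<le> \<psi> T1 * (1 + f t) powr (-\<epsilon>)" if t: "t \<in> I" "T1 \<le> t" for t
    unfolding eta_psi[OF t(1)] using psi_dec[OF t] by (intro mult_right_mono) auto
  have eta_le2: "\<eta> t \<le> \<psi> T1" if t: "t \<in> I" "T1 \<le> t" for t
  proof -
    have "(1 + f t) powr \<epsilon> \<ge> 1" using f_pos[OF t(1)] p(1) by (intro ge_one_powr_ge_zero) auto
    then have le1: "(1 + f t) powr (-\<epsilon>) \<le> 1" by (simp add: powr_minus inverse_le_1_iff)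
    have "\<psi> T1 \<ge> 0" unfolding \<psi>_def by simp
    then have "\<psi> T1 * (1 + f t) powr (-\<epsilon>) \<le> \<psi> T1 * 1" using le1 by (intro mult_left_mono) auto
    then show ?thesis using eta_le[OF t] by simp
  qed
  have sub: "{t0..T1} \<subseteq> I" using ivl_between[OF t0I T1(1)] by auto
  have "continuous_on I \<eta>" using deriv_cont_on dD by blast
  then have "continuous_on {t0..T1} \<eta>" using sub continuous_on_subset by blast
  moreover have "{t0..T1} \<noteq> {}" using T1(1) by (simp add: ivl_def)
  ultimately obtain x where x: "x \<in> {t0..T1}" "\<forall>y\<in>{t0..T1}. \<eta> y \<le> \<eta> x"
    using continuous_attains_sup[OF compact_Icc] by blast
  define C where "C = max (\<eta> x) (\<psi> T1)"
  have xI: "x \<in> I" using x(1) sub by blast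
  have C0: "C > 0" unfolding C_def using eta_pos[OF xI] by (simp add: less_max_iff_disj)
  have bound: "\<forall>t\<in>I. 0 < \<eta> t \<and> \<eta> t \<le> C"
  proof
    fix t assume t: "t \<in> I"
    show "0 < \<eta> t \<and> \<eta> t \<le> C"
    proof (cases "t \<le> T1")
      case True
      then have "t \<in> {t0..T1}" using t by (simp add: ivl_def)
      then have "\<eta> t \<le> \<eta> x" using x(2) by blast
      then show ?thesis using eta_pos[OF t] unfolding C_def by (simp add: le_max_iff_disj)
    next
      case False
      then have "\<eta> t \<le> \<psi> T1" using eta_le2[OF t] by simp
      then show ?thesis using eta_pos[OF t] unfolding C_def by (simp add: le_max_iff_disj)
    qed
  qed
  have lim: "(\<eta> \<longlongrightarrow> 0) (to_tm tm)"
  proof (rule tendstoI)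
    fix e :: real assume e: "e > 0"
    define M where "M = (\<psi> T1 / e + 1) powr (1/\<epsilon>)"
    have psi0: "\<psi> T1 \<ge> 0" unfolding \<psi>_def by simp
    have M1: "M \<ge> 1" unfolding M_def using psi0 e p(1) by (intro ge_one_powr_ge_zero) auto
    have "EV (\<lambda>t. dist (\<eta> t) 0 < e)"
    proof -
      have A1: "EV (\<lambda>t. T1 \<le> t)" unfolding EV_def using T1(1) by blast
      show ?thesis using EV_conj[OF fbig[of M] A1]
      proof (rule EV_mono)
        fix t assume t: "t \<in> I" and h: "M \<le> f t \<and> T1 \<le> t"
        have "(1 + f t) powr \<epsilon> \<ge> M powr \<epsilon>" using h M1 p(1) by (intro powr_mono2) auto
        moreover have "M powr \<epsilon> = \<psi> T1 / e + 1" unfolding M_def using psi0 e p(1) by (simp add: powr_powr)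
        ultimately have big: "(1 + f t) powr \<epsilon> > \<psi> T1 / e" by simp
        have "\<eta> t \<le> \<psi> T1 / (1 + f t) powr \<epsilon>" using eta_le[OF t] h by (simp add: powr_minus divide_inverse)
        also have "\<dots> < e"
        proof -
          have "(1 + f t) powr \<epsilon> > 0" using fpI[OF t] by simp
          then show ?thesis using big e by (simp add: divide_less_eq field_simps)
        qed
        finally show "dist (\<eta> t) 0 < e" using eta_pos[OF t] by simp
      qed
    qed
    then show "eventually (\<lambda>t. dist (\<eta> t) 0 < e) (to_tm tm)" by (rule EV_filter)
  qed
  have E1: "\<exists>\<eta>'. (\<forall>t\<in>I. (\<eta> has_real_derivative \<eta>' t) (at t within I)) \<and> continuous_on I \<eta>'"
    by (rule exI[of _ \<eta>']) (use dD cD in blast)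
  have E2: "\<exists>C>0. \<forall>t\<in>I. 0 < \<eta> t \<and> \<eta> t \<le> C"
    by (rule exI[of _ C]) (use C0 bound in blast)
  have eta_pt: "1 / (exp (- A * integral {t0..t} (\<lambda>s. f s * (1 + f s) / (s\<^sup>2 * f1 s))) powr \<theta> * (1 + f t)) = \<eta> t" for t
    using fun_cong[OF eta_eq, of t] by simp
  show ?thesis unfolding Let_def eta_eq eta_pt using E1 E2 lim by (intro conjI)
qed

end



context sol begin

lemma J_mem: "x \<in> ivl t0 (ereal S) \<longleftrightarrow> t0 \<le> x \<and> x < S" by (simp add: ivl_def)

lemma glue_deriv:
  assumes fin: "tm = ereal T" and d0: "\<delta> > 0"
    and dI: "\<And>t. t \<in> I \<Longrightarrow> (p has_real_derivative p' t) (at t within I)"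
    and dR: "\<And>t. t \<in> {T..T+\<delta>} \<Longrightarrow> (q has_real_derivative q' t) (at t within {T..T+\<delta>})"
    and pL: "(p \<longlongrightarrow> q T) (at_left T)" and p'L: "(p' \<longlongrightarrow> q' T) (at_left T)"
    and t: "t \<in> ivl t0 (ereal (T+\<delta>))"
  shows "((\<lambda>t. if t < T then p t else q t) has_real_derivative (if t < T then p' t else q' t))
           (at t within ivl t0 (ereal (T+\<delta>)))"
proof -
  let ?J = "ivl t0 (ereal (T+\<delta>))"
  let ?H = "\<lambda>t. if t < T then p t else q t"
  have tT: "t0 < T" using htm fin by simp
  have IT: "x \<in> I \<longleftrightarrow> t0 \<le> x \<and> x < T" for x using fin by (simp add: ivl_def)
  have tJ: "t0 \<le> t" "t < T + \<delta>" using t by (auto simp: J_mem)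
  consider (lt) "t < T" | (gt) "t > T" | (eq) "t = T" by linarith
  then show ?thesis
  proof cases
    case lt
    have tI: "t \<in> I" using IT tJ lt by simp
    have "at t within ?J = at t within I"
      by (rule at_within_nhd[of _ "{..<T}"]) (use lt d0 in \<open>auto simp: J_mem IT\<close>)
    moreover have "(?H has_real_derivative p' t) (at t within I)"
    proof (rule has_field_derivative_transform_within[OF dI[OF tI], of "T - t"])
      show "0 < T - t" using lt by simp
      show "t \<in> I" by (rule tI)
      fix x assume "x \<in> I" "dist x t < T - t"
      then have "x < T" by (auto simp: dist_real_def)
      then show "p x = ?H x" by simp
    qed
    ultimately show ?thesis using lt by simp
  next
    case gt
    have tR: "t \<in> {T..T+\<delta>}" using gt tJ by simp
    have "at t within ?J = at t within {T..T+\<delta>}"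
      by (rule at_within_nhd[of _ "{T<..<T+\<delta>}"]) (use gt tJ tT in \<open>auto simp: J_mem\<close>)
    moreover have "(?H has_real_derivative q' t) (at t within {T..T+\<delta>})"
    proof (rule has_field_derivative_transform_within[OF dR[OF tR], of 1])
      show "0 < (1::real)" by simp
      show "t \<in> {T..T+\<delta>}" by (rule tR)
      fix x assume "x \<in> {T..T+\<delta>}" "dist x t < 1"
      then show "q x = ?H x" by simp
    qed
    ultimately show ?thesis using gt by simp
  next
    case eq
    have left: "(?H has_real_derivative q' T) (at T within {t0..T})"
    proof (rule left_deriv[OF tT _ pL p'L])
      fix x assume x: "t0 < x" "x < T"
      then have "x \<in> I" using IT by simp
      then show "(p has_real_derivative p' x) (at x)" using dI deriv_ivl_at x by blast
    qed auto
    have TR: "T \<in> {T..T+\<delta>}" using d0 by simp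
    have "(?H has_real_derivative q' T) (at T within {T..T+\<delta>})"
    proof (rule has_field_derivative_transform_within[OF dR[OF TR], of 1])
      fix x assume "x \<in> {T..T+\<delta>}" "dist x T < 1"
      then show "q x = ?H x" by simp
    qed (use TR in auto)
    then have right: "(?H has_real_derivative q' T) (at T within {T..<T+\<delta>})"
      by (rule DERIV_subset) auto
    have Jeq: "?J = {t0..T} \<union> {T..<T+\<delta>}" using tT d0 by (auto simp: J_mem)
    have "(?H has_real_derivative q' T) (at T within {t0..T} \<union> {T..<T+\<delta>})"
      using left right unfolding has_field_derivative_iff by (simp add: Lim_within_Un)
    then show ?thesis using eq Jeq by simp
  qed
qed


lemma fin_bounds:
  assumes fin: "tm = ereal T" and fb: "\<And>t. t \<in> I \<Longrightarrow> f t \<le> M"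
  obtains F1 where "\<And>t. t \<in> I \<Longrightarrow> f1 t \<le> F1"
proof -
  have IT: "x \<in> I \<longleftrightarrow> t0 \<le> x \<and> x < T" for x using fin by (simp add: ivl_def)
  have Tp: "T > 0" using htm fin ht0 by simp
  have M0: "M \<ge> 0" using fb[OF t0I] f_pos[OF t0I] by simp
  define K where "K = 2*b*T powr (2*a-2)*M"
  have K0: "K \<ge> 0" unfolding K_def using hb M0 by simp
  define F' where "F' x = K * f1 x - 2*b * x powr (2*a-2) * f x * (1+f x) powr (1-2*c) * f1 x" for x
  have d: "\<forall>x\<in>I. ((\<lambda>x. K * f x - E x) has_real_derivative F' x) (at x within I)"
    unfolding F'_def using hf1 E_deriv by (intro ballI DERIV_diff DERIV_cmult) auto
  have Eb: "E t \<le> E t0 + K * (f t - f t0)" if t: "t \<in> I" for t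
  proof -
    have "K * f t0 - E t0 \<le> K * f t - E t"
    proof (rule mono_ivl[OF d t0I t])
      show "t0 \<le> t" using t by (simp add: IT)
      fix x assume x: "t0 < x" "x < t"
      then have xI: "x \<in> I" using IT t by simp
      have xp: "x > 0" using tpos[OF xI] .
      have a1: "x powr (2*a-2) \<le> T powr (2*a-2)" using xI xp ha by (intro powr_mono2) (auto simp: IT)
      have a2: "f x \<le> M" using fb[OF xI] .
      have a3: "(1+f x) powr (1-2*c) \<le> 1"
      proof -
        have "(1+f x) powr (1-2*c) \<le> (1+f x) powr 0" using f_pos[OF xI] hc1 by (intro powr_mono) auto
        then show ?thesis using f_pos[OF xI] by simp
      qed
      have n: "x powr (2*a-2) \<ge> 0" "f x \<ge> 0" "(1+f x) powr (1-2*c) \<ge> 0" "f1 x \<ge> 0"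
        using f_pos[OF xI] f1_pos[OF xI] by auto
      have "x powr (2*a-2) * f x \<le> T powr (2*a-2) * M" using a1 a2 n by (intro mult_mono) auto
      then have "x powr (2*a-2) * f x * (1+f x) powr (1-2*c) \<le> T powr (2*a-2) * M * 1"
        using a3 n M0 by (rule_tac mult_mono) auto
      then have "2*b * (x powr (2*a-2) * f x * (1+f x) powr (1-2*c)) * f1 x \<le> 2*b * (T powr (2*a-2) * M) * f1 x"
        using hb n by (intro mult_right_mono mult_left_mono) auto
      then show "0 \<le> F' x" unfolding F'_def K_def by (simp add: algebra_simps)
    qed
    then show ?thesis by (simp add: algebra_simps)
  qed
  define EB where "EB = E t0 + K * (M - \<beta>)"
  define Q where "Q = EB * (1+M) powr (2*c) / t0 powr (2*a)"
  show ?thesis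
  proof (rule that[of "1 + Q"])
    fix t assume t: "t \<in> I"
    have tp: "t > 0" using tpos[OF t] .
    have ft: "f t > 0" using f_pos[OF t] .
    have EtB: "E t \<le> EB" using Eb[OF t] fb[OF t] K0 hinit unfolding EB_def
      by (smt (verit, ccfv_SIG) mult_left_mono)
    have E0: "E t \<ge> 0" unfolding E_def by simp
    have sq: "(f1 t)\<^sup>2 = E t * (1 + f t) powr (2*c) / t powr (2*a)"
      unfolding E_def using tp ft by (simp add: field_simps)
    have "E t * (1 + f t) powr (2*c) \<le> EB * (1+M) powr (2*c)"
      using EtB E0 fb[OF t] ft hc1 by (intro mult_mono powr_mono2) auto
    moreover have "t0 powr (2*a) \<le> t powr (2*a)" using t ht0 ha by (intro powr_mono2) (auto simp: IT)
    moreover have "E t * (1 + f t) powr (2*c) \<ge> 0" using E0 by simp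
    ultimately have "(f1 t)\<^sup>2 \<le> Q" unfolding sq Q_def using ht0
      by (intro frac_le) auto
    moreover have "f1 t \<le> 1 + (f1 t)\<^sup>2" by (smt (verit) power2_eq_square mult_le_cancel_left1 mult_nonneg_nonneg)
    ultimately show "f1 t \<le> 1 + Q" by simp
  qed
qed


lemma fin_ext:
  assumes fin: "tm = ereal T" and fb: "\<And>t. t \<in> I \<Longrightarrow> f t \<le> M"
  shows "\<exists>t'. t' > tm \<and> (\<exists>h. ode_sol a b c t0 \<beta> \<beta>0 (ivl t0 t') h \<and> (\<forall>t\<in>I. h t = f t))"
proof -
  have IT: "x \<in> I \<longleftrightarrow> t0 \<le> x \<and> x < T" for x using fin by (simp add: ivl_def)
  have tT: "t0 < T" using htm fin by simp
  have Tp: "T > 0" using tT ht0 by simp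
  obtain F1 where F1: "\<And>t. t \<in> I \<Longrightarrow> f1 t \<le> F1" using fin_bounds[OF fin fb] by blast
  define K2 where "K2 = a / t0 * F1"
  have f2lb: "f2 t \<ge> - K2" if t: "t \<in> I" for t
  proof -
    have tp: "t > 0" using tpos[OF t] .
    have "a / t * f1 t \<le> a / t0 * F1"
      using F1[OF t] f1_pos[OF t] ha t ht0 by (intro mult_mono divide_left_mono) (auto simp: IT)
    moreover have "b / t\<^sup>2 * f t * (1 + f t) \<ge> 0" using hb f_pos[OF t] by simp
    moreover have "c * (f1 t)\<^sup>2 / (1 + f t) \<ge> 0" using hc1 f_pos[OF t] by simp
    ultimately show ?thesis unfolding K2_def using f2_eq[OF t] by simp
  qed
  define L1 where "L1 = Sup (f ` {t0..<T})"
  have fmono: "f x \<le> f y" if "t0 \<le> x" "x \<le> y" "y < T" for x y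
    using f_mono that by (auto simp: IT)
  have fL: "(f \<longlongrightarrow> L1) (at_left T)" and fle: "\<And>x. t0 \<le> x \<Longrightarrow> x < T \<Longrightarrow> f x \<le> L1"
  proof -
    have fb': "\<And>x. t0 \<le> x \<Longrightarrow> x < T \<Longrightarrow> f x \<le> M" using fb by (simp add: IT)
    show "(f \<longlongrightarrow> L1) (at_left T)" unfolding L1_def by (rule mono_lim(1)[where g = f, OF tT fmono fb'])
    show "\<And>x. t0 \<le> x \<Longrightarrow> x < T \<Longrightarrow> f x \<le> L1" unfolding L1_def by (rule mono_lim(2)[where g = f, OF tT fmono fb'])
  qed
  have L1p: "L1 > 0" using fle[of t0] tT hinit h\<beta> by simp
  define g where "g t = f1 t + K2 * t" for t
  have gmono: "g x \<le> g y" if "t0 \<le> x" "x \<le> y" "y < T" for x y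
  proof -
    have d: "\<forall>t\<in>I. (g has_real_derivative f2 t + K2) (at t within I)"
      unfolding g_def[abs_def] using hf2 by (intro ballI derivative_eq_intros) auto
    have nn: "0 \<le> f2 t + K2" if "t0 < t" "t < T" for t using f2lb[of t] that by (simp add: IT)
    show ?thesis by (rule mono_ivl[OF d]) (use that nn in \<open>auto simp: IT\<close>)
  qed
  have gb: "g x \<le> F1 + K2 * T" if "t0 \<le> x" "x < T" for x
  proof -
    have "K2 \<ge> 0" unfolding K2_def using F1[OF t0I] f1_pos[OF t0I] ha ht0 by simp
    then have "K2 * x \<le> K2 * T" using that by (intro mult_left_mono) auto
    then show ?thesis unfolding g_def using F1[of x] that by (auto simp: IT)
  qed
  define Lg where "Lg = Sup (g ` {t0..<T})"
  have gL: "(g \<longlongrightarrow> Lg) (at_left T)" unfolding Lg_def by (rule mono_lim(1)[where g = g, OF tT gmono gb])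
  define L2 where "L2 = Lg - K2 * T"
  have f1L: "(f1 \<longlongrightarrow> L2) (at_left T)"
  proof -
    have "((\<lambda>t. g t - K2 * t) \<longlongrightarrow> Lg - K2 * T) (at_left T)"
      by (intro tendsto_intros gL)
    then show ?thesis unfolding L2_def g_def by simp
  qed
  have f2L: "(f2 \<longlongrightarrow> Gf a b c T L1 L2) (at_left T)"
  proof -
    have "((\<lambda>t. Gf a b c t (f t) (f1 t)) \<longlongrightarrow> Gf a b c T L1 L2) (at_left T)"
      unfolding Gf_def using Tp L1p by (intro tendsto_intros fL f1L) auto
    moreover have "eventually (\<lambda>t. Gf a b c t (f t) (f1 t) = f2 t) (at_left T)"
    proof -
      have "eventually (\<lambda>t. t \<in> {t0<..<T}) (at_left T)" using eventually_at_left_real[OF tT] .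
      then show ?thesis
      proof (rule eventually_mono)
        fix t assume "t \<in> {t0<..<T}"
        then have "t \<in> I" using IT by simp
        then show "Gf a b c t (f t) (f1 t) = f2 t" unfolding Gf_def using f2_eq by simp
      qed
    qed
    ultimately show ?thesis by (rule Lim_transform_eventually)
  qed
  obtain \<delta> y z where d0: "\<delta> > 0"
    and yD: "\<And>t. t \<in> {T..T+\<delta>} \<Longrightarrow> (y has_real_derivative z t) (at t within {T..T+\<delta>})"
    and zD: "\<And>t. t \<in> {T..T+\<delta>} \<Longrightarrow> (z has_real_derivative Gf a b c t (y t) (z t)) (at t within {T..T+\<delta>})"
    and yzb: "\<And>t. t \<in> {T..T+\<delta>} \<Longrightarrow> \<bar>y t - L1\<bar> \<le> 1 \<and> \<bar>z t - L2\<bar> \<le> 1"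
    and yT: "y T = L1" and zT: "z T = L2"
    using picard[OF Tp _ _ _ L1p, of a b c L2] ha hb hc1 by auto
  let ?J = "ivl t0 (ereal (T+\<delta>))"
  define h where "h t = (if t < T then f t else y t)" for t
  define h1 where "h1 t = (if t < T then f1 t else z t)" for t
  define h2 where "h2 t = (if t < T then f2 t else Gf a b c t (y t) (z t))" for t
  have Jeq: "?J = {t0..T} \<union> {T..<T+\<delta>}" using tT d0 by (auto simp: J_mem)
  have hD: "(h has_real_derivative h1 t) (at t within ?J)" if t: "t \<in> ?J" for t
    unfolding h_def[abs_def] h1_def
    by (rule glue_deriv[OF fin d0 _ yD _ _ t]) (use hf1 fL f1L yT zT in auto)
  have h1D: "(h1 has_real_derivative h2 t) (at t within ?J)" if t: "t \<in> ?J" for t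
    unfolding h1_def[abs_def] h2_def
    by (rule glue_deriv[OF fin d0 _ zD _ _ t]) (use hf2 f1L f2L yT zT in auto)
  have yc: "continuous_on {T..T+\<delta>} y" by (rule deriv_cont_on[where F'=z]) (intro ballI yD)
  have zc: "continuous_on {T..T+\<delta>} z" by (rule deriv_cont_on[where F'="\<lambda>t. Gf a b c t (y t) (z t)"]) (intro ballI zD)
  have Gc: "continuous_on {T..T+\<delta>} (\<lambda>t. Gf a b c t (y t) (z t))"
    unfolding Gf_def
  proof (intro continuous_intros yc zc ballI)
    fix t assume t: "t \<in> {T..T+\<delta>}"
    show "t \<noteq> 0" using t Tp by auto
    show "t\<^sup>2 \<noteq> 0" using t Tp by auto
    show "1 + y t \<noteq> 0" using yzb[OF t] L1p by auto
  qed
  have h2c: "continuous_on ?J h2"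
    unfolding continuous_on_eq_continuous_within
  proof
    fix t assume t: "t \<in> ?J"
    have tJ: "t0 \<le> t" "t < T + \<delta>" using t by (auto simp: J_mem)
    consider (lt) "t < T" | (gt) "t > T" | (eq) "t = T" by linarith
    then show "continuous (at t within ?J) h2"
    proof cases
      case lt
      have tI: "t \<in> I" using IT tJ lt by simp
      have "at t within ?J = at t within I"
        by (rule at_within_nhd[of _ "{..<T}"]) (use lt d0 in \<open>auto simp: J_mem IT\<close>)
      moreover have "(f2 \<longlongrightarrow> f2 t) (at t within I)"
        using hf2c tI unfolding continuous_on_def by blast
      moreover have "eventually (\<lambda>x. f2 x = h2 x) (at t within I)"
        by (rule ev_within) (simp add: h2_def IT)
      ultimately show ?thesis unfolding continuous_within h2_def using lt
        by (simp add: Lim_transform_eventually)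
    next
      case gt
      have tR: "t \<in> {T..T+\<delta>}" using gt tJ by simp
      have "at t within ?J = at t within {T..T+\<delta>}"
        by (rule at_within_nhd[of _ "{T<..<T+\<delta>}"]) (use gt tJ tT in \<open>auto simp: J_mem\<close>)
      moreover have "((\<lambda>t. Gf a b c t (y t) (z t)) \<longlongrightarrow> Gf a b c t (y t) (z t)) (at t within {T..T+\<delta>})"
        using Gc tR unfolding continuous_on_def by blast
      moreover have "eventually (\<lambda>x. Gf a b c x (y x) (z x) = h2 x) (at t within {T..T+\<delta>})"
        by (rule ev_within) (simp add: h2_def)
      ultimately show ?thesis unfolding continuous_within h2_def using gt
        by (simp add: Lim_transform_eventually)
    next
      case eq
      have TR: "T \<in> {T..T+\<delta>}" using d0 by simp
      have l: "(f2 \<longlongrightarrow> h2 T) (at T within {t0..T})"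
        unfolding h2_def using at_left_within[OF f2L] yT zT by simp
      have "((\<lambda>t. Gf a b c t (y t) (z t)) \<longlongrightarrow> h2 T) (at T within {T..T+\<delta>})"
        using Gc TR unfolding continuous_on_def h2_def by simp
      then have r: "((\<lambda>t. Gf a b c t (y t) (z t)) \<longlongrightarrow> h2 T) (at T within {T..<T+\<delta>})"
        by (rule tendsto_within_subset) auto
      have "(h2 \<longlongrightarrow> h2 T) (at T within {t0..T} \<union> {T..<T+\<delta>})"
        by (rule glue_tendsto[OF l r]) (auto simp: h2_def)
      then show ?thesis unfolding continuous_within using eq Jeq by simp
    qed
  qed
  have odeq: "h2 t + a / t * h1 t - b / t\<^sup>2 * h t * (1 + h t) - c * (h1 t)\<^sup>2 / (1 + h t) = 0"
    if t: "t \<in> ?J" for t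
  proof (cases "t < T")
    case True
    then have "t \<in> I" using t IT by (simp add: J_mem)
    then show ?thesis using hode True unfolding h_def h1_def h2_def by simp
  next
    case False
    then show ?thesis unfolding h_def h1_def h2_def Gf_def by simp
  qed
  have all: "\<forall>t\<in>?J. (h has_real_derivative h1 t) (at t within ?J) \<and> (h1 has_real_derivative h2 t) (at t within ?J)
      \<and> h2 t + a / t * h1 t - b / t\<^sup>2 * h t * (1 + h t) - c * (h1 t)\<^sup>2 / (1 + h t) = 0"
    by (intro ballI conjI hD h1D odeq)
  have i1: "h t0 = \<beta>" unfolding h_def using tT hinit by simp
  have i2: "h1 t0 = \<beta>0" unfolding h1_def using tT hinit by simp
  have sol: "ode_sol a b c t0 \<beta> \<beta>0 ?J h"
    unfolding ode_sol_def by (intro exI[of _ h1] exI[of _ h2] conjI all h2c i1 i2)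
  have agree: "\<forall>t\<in>I. h t = f t" unfolding h_def by (simp add: IT)
  have "ereal (T + \<delta>) > tm" using fin d0 by simp
  then show ?thesis using sol agree by (intro exI[of _ "ereal (T+\<delta>)"] conjI exI[of _ h])
qed


lemma fin_fbig:
  assumes fin: "tm = ereal T"
    and hmax: "\<forall>t'::ereal. t' > tm \<longrightarrow>
                 \<not> (\<exists>h. ode_sol a b c t0 \<beta> \<beta>0 (ivl t0 t') h \<and> (\<forall>t\<in>ivl t0 tm. h t = f t))"
  shows "EV (\<lambda>t. f t \<ge> M)"
proof (rule ccontr)
  assume nev: "\<not> EV (\<lambda>t. f t \<ge> M)"
  have fb: "f t \<le> M" if t: "t \<in> I" for t
  proof (rule ccontr)
    assume "\<not> f t \<le> M"
    then have "\<forall>s\<in>I. t \<le> s \<longrightarrow> f s \<ge> M" using f_mono t by force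
    then have "EV (\<lambda>t. f t \<ge> M)" unfolding EV_def using t by blast
    then show False using nev by simp
  qed
  obtain t' h where "t' > tm" "ode_sol a b c t0 \<beta> \<beta>0 (ivl t0 t') h" "\<forall>t\<in>I. h t = f t"
    using fin_ext[OF fin fb] by blast
  then show False using hmax by blast
qed

end

theorem propositiont:
  fixes a b c t0 \<beta> \<beta>0 \<theta> A :: real and tm :: ereal
    and f f1 f2 :: "real \<Rightarrow> real"
  assumes ha: "a > 1" and hb: "b > 0" and hc: "1 < c" "c < 3/2"
    and ht0: "t0 > 0" and h\<beta>: "\<beta> > 0" "\<beta>0 > 0"
    and htm: "ereal t0 < tm"
    and hf1: "\<forall>t\<in>ivl t0 tm. (f has_real_derivative f1 t) (at t within ivl t0 tm)"
    and hf2: "\<forall>t\<in>ivl t0 tm. (f1 has_real_derivative f2 t) (at t within ivl t0 tm)"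
    and hf2c: "continuous_on (ivl t0 tm) f2"
    and hode: "\<forall>t\<in>ivl t0 tm. f2 t + a / t * f1 t - b / t\<^sup>2 * f t * (1 + f t)
                                - c * (f1 t)\<^sup>2 / (1 + f t) = 0"
    and hinit: "f t0 = \<beta>" "f1 t0 = \<beta>0"
    and hmax: "\<forall>t'::ereal. t' > tm \<longrightarrow>
                 \<not> (\<exists>h. ode_sol a b c t0 \<beta> \<beta>0 (ivl t0 t') h \<and> (\<forall>t\<in>ivl t0 tm. h t = f t))"
    and h\<theta>: "\<theta> \<ge> 1" and hA: "A > 0" and hA\<theta>: "A * \<theta> < 2 * b / (3 - 2 * c)"
  shows "let g = (\<lambda>t. exp (- A * integral {t0..t} (\<lambda>s. f s * (1 + f s) / (s\<^sup>2 * f1 s))));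
             \<eta> = (\<lambda>t. 1 / (g t powr \<theta> * (1 + f t)))
         in (\<exists>\<eta>'. (\<forall>t\<in>ivl t0 tm. (\<eta> has_real_derivative \<eta>' t) (at t within ivl t0 tm))
                   \<and> continuous_on (ivl t0 tm) \<eta>')
          \<and> (\<exists>C>0. \<forall>t\<in>ivl t0 tm. 0 < \<eta> t \<and> \<eta> t \<le> C)
          \<and> (\<eta> \<longlongrightarrow> 0) (to_tm tm)"
proof -
  interpret S: sol a b c t0 \<beta> \<beta>0 tm f f1 f2
    by (rule sol.intro) (use ha hb hc ht0 h\<beta> htm hf1 hf2 hf2c hode hinit in auto)
  have fbig: "S.EV (\<lambda>t. f t \<ge> M)" for M
  proof (cases rule: S.tm_cases)
    case inf
    then show ?thesis by (rule S.inf_f_big)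
  next
    case (fin T)
    then show ?thesis using S.fin_fbig hmax by blast
  qed
  have ratio: "S.EV (\<lambda>t. 1 + f (max t0 (l*t)) \<le> \<rho> * (1 + f t))"
    if "0 < l" "l < 1" "0 < \<rho>" "\<rho> < 1" for l \<rho>
  proof (cases rule: S.tm_cases)
    case inf
    then show ?thesis using S.inf_ratio that by blast
  next
    case (fin T)
    then show ?thesis using S.fin_ratio[OF fin(1) fbig] that by blast
  qed
  show ?thesis by (rule S.eta_main[OF fbig ratio h\<theta> hA hA\<theta>])
qed


end
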